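(* Let $g:\mathbb{N}\to\mathbb{C}$ be an arithmetic function and $f=\mathrm{id}\ast g$, i.e. $f(n)=\sum_{d\mid n} d\, g(n/d)$. Let $\delta\geq 0$ be a fixed constant and $(\kappa,\lambda)$ an exponent pair. For $x\ge1$ and $D\ge1$ define \[ \mathfrak{S}_{\delta}^{f}(x,D):=\sum_{D<d\leqslant 2D}\frac{f(d)}{d}\psi\left(\frac{x}{d+\delta}\right). \] (i) If $g(n)\ll 1$ for all $n\ge1$, then \[ \mathfrak{S}_{\delta}^{f}(x,D)\ll (x^\kappa D^{-\kappa+\lambda})^{1/(1+\kappa)} + x^\kappa D^{-2\kappa+\lambda}\log x + x^{-1}D^{2} \] uniformly for $1\leqslant D\leqslant x$. (ii) If for every $\varepsilon>0$ one has $g(n)\ll_\varepsilon n^\varepsilon$ for all $n\ge1$, then for every $\varepsilon>0$, \[ \mathfrak{S}_{\delta}^{f}(x,D)\ll D^\varepsilon\big((x^\kappa D^{-\kappa+\lambda})^{1/(1+\kappa)} + x^\kappa D^{-2\kappa+\lambda}\log x + x^{-1}D^{2}\big) \] uniformly for $1\leqslant D\leqslant x$.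
   Context: $\psi(t)=\{t\}-\tfrac12$, where $\{t\}$ is the fractional part of $t$; $e(t)=e^{2\pi i t}$; $\mathrm{id}(n)=n$ and $\ast$ is Dirichlet convolution. An exponent pair $(\kappa,\lambda)$ (in the sense of van der Corput / Graham–Kolesnik) is a pair with $0\le\kappa\le\tfrac12\le\lambda\le1$ such that for every sufficiently smooth real function $F$ on an interval $I\subset(N,2N]$ whose derivatives satisfy $|F^{(j)}(t)|\asymp T N^{-j}$ (for the required range of $j$, with $T>0$), one has $\sum_{n\in I} e(F(n))\ll (T/N)^{\kappa}N^{\lambda}+N/T$; e.g. $(1/2,1/2)$ is an exponent pair. Implied constants may depend on $\delta,\kappa,\lambda$, the implied constant in the bound for $g$, and (in (ii)) on $\varepsilon$. *)

theory Defs
  imports "HOL-Analysis.Analysis"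
begin

definition psi :: "real \<Rightarrow> real" where
  "psi t = frac t - 1/2"

definition ee :: "real \<Rightarrow> complex" where
  "ee t = exp (2 * of_real pi * \<i> * of_real t)"

definition id_conv :: "(nat \<Rightarrow> complex) \<Rightarrow> nat \<Rightarrow> complex" where
  "id_conv g n = (\<Sum>d\<in>{d. d dvd n}. of_nat d * g (n div d))"

text \<open>Exponent pair (van der Corput / Graham--Kolesnik): there is a number r of
  derivatives such that, for every constant A >= 1 in the size conditions
  T N^{-j}/A <= |F^(j)| <= A T N^{-j} (j = 1..r), the exponential sum over any
  subinterval (a,b] of (N,2N] is bounded by C ((T/N)^kappa N^lambda + N/T).
  Fd j is the j-th derivative of F = Fd 0.\<close>
definition exponent_pair :: "real \<Rightarrow> real \<Rightarrow> bool" where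
  "exponent_pair ka la \<longleftrightarrow>
     0 \<le> ka \<and> ka \<le> 1/2 \<and> 1/2 \<le> la \<and> la \<le> 1 \<and>
     (\<exists>r::nat. r \<ge> 1 \<and>
       (\<forall>A::real. A \<ge> 1 \<longrightarrow> (\<exists>C>0. \<forall>(N::real) (T::real) (a::real) (b::real) (Fd::nat \<Rightarrow> real \<Rightarrow> real).
          N \<ge> 1 \<longrightarrow> T > 0 \<longrightarrow> N \<le> a \<longrightarrow> a \<le> b \<longrightarrow> b \<le> 2 * N \<longrightarrow>
          (\<forall>j<r. \<forall>t\<in>{a..b}. (Fd j has_real_derivative Fd (Suc j) t) (at t)) \<longrightarrow>
          (\<forall>j\<in>{1..r}. \<forall>t\<in>{a..b}. T / N ^ j / A \<le> \<bar>Fd j t\<bar> \<and> \<bar>Fd j t\<bar> \<le> A * T / N ^ j) \<longrightarrow>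
          cmod (\<Sum>n\<in>{n::int. a < of_int n \<and> of_int n \<le> b}. ee (Fd 0 (of_int n)))
            \<le> C * ((T / N) powr ka * N powr la + N / T))))"

definition frakS :: "real \<Rightarrow> (nat \<Rightarrow> complex) \<Rightarrow> real \<Rightarrow> real \<Rightarrow> complex" where
  "frakS dl f x D = (\<Sum>d\<in>{d::nat. D < real d \<and> real d \<le> 2 * D}.
      f d / of_nat d * of_real (psi (x / (real d + dl))))"

end

theory Submission
  imports Defs
begin

lemma ee_cis: "ee t = cis (2*pi*t)"
  by (simp add: ee_def cis_conv_exp mult_ac)

lemma ee_pow: "(ee t)^n = ee (real n * t)"
proof -
  have "(ee t)^n = cis (real n * (2*pi*t))" unfolding ee_cis by (rule Complex.DeMoivre)
  thus ?thesis by (simp add: ee_cis mult_ac)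
qed

lemma sin_series:
  assumes "0 \<le> r" "r < 1"
  shows "(\<lambda>n. r^Suc n * sin(2*pi*real (Suc n)*t) / real (Suc n)) sums (- Im (ln (1 - of_real r * ee t)))"
proof -
  have c: "cmod (- (of_real r * ee t)) < 1" using assms by (simp add: ee_cis norm_mult)
  have "(\<lambda>n. - ((of_real r * ee t)^n) / of_nat n) sums ln (1 - of_real r * ee t)"
    using Ln_series'[OF c] by simp
  hence "(\<lambda>n. Im (- ((of_real r * ee t)^n) / of_nat n)) sums Im (ln (1 - of_real r * ee t))"
    by (rule sums_Im)
  hence "(\<lambda>n. - (r^n * sin(2*pi*real n*t) / real n)) sums Im (ln (1 - of_real r * ee t))"
    by (simp only: power_mult_distrib ee_pow) (simp add: ee_cis mult_ac Im_divide_of_nat)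
  hence "(\<lambda>n. r^n * sin(2*pi*real n*t) / real n) sums (- Im (ln (1 - of_real r * ee t)))"
    using sums_minus by fastforce
  thus ?thesis by (subst sums_Suc_iff) simp
qed

definition Gs :: "real \<Rightarrow> real \<Rightarrow> real" where
  "Gs r t = (\<Sum>n. r^Suc n * cos(2*pi*real(Suc n)*t) / (real(Suc n))^2)"

lemma Gs_deriv:
  assumes "0 \<le> r" "r < 1"
  shows "(Gs r has_real_derivative (2*pi*Im(ln(1 - of_real r * ee t)))) (at t)"
proof -
  define f where "f n t = r^Suc n * cos(2*pi*real(Suc n)*t) / (real(Suc n))^2" for n t
  define f' where "f' n t = r^Suc n * (-(sin(2*pi*real(Suc n)*t) * (2*pi*real(Suc n)))) / (real(Suc n))^2" for n t
  have f'eq: "f' n t = -(2*pi) * (r^Suc n * sin(2*pi*real (Suc n)*t) / real (Suc n))" for n t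
  proof -
    have aux: "kk > 0 \<Longrightarrow> aa * (-(ss * (cc * kk))) / kk^2 = - cc * (aa * ss / kk)" for aa ss cc kk :: real
      by (simp add: power2_eq_square field_simps)
    show ?thesis unfolding f'_def by (rule aux) simp
  qed
  have der: "(f n has_field_derivative f' n t) (at t within UNIV)" for n t
  proof -
    have e1: "f n = (\<lambda>t. (r^Suc n / (real(Suc n))^2) * cos(2*pi*real(Suc n)*t))"
      by (simp add: fun_eq_iff f_def)
    have e2: "f' n t = (r^Suc n / (real(Suc n))^2) * (-(sin(2*pi*real(Suc n)*t) * (2*pi*real(Suc n))))"
      by (simp add: f'_def)
    have "((\<lambda>t. cos(2*pi*real(Suc n)*t)) has_field_derivative (-(sin(2*pi*real(Suc n)*t) * (2*pi*real(Suc n))))) (at t)"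
      by (auto intro!: derivative_eq_intros)
    then show ?thesis unfolding e1 e2 by (intro DERIV_cmult) simp
  qed
  have bnd: "norm (f' n t) \<le> 2*pi*r^Suc n" for n t
  proof -
    have "norm (f' n t) = 2*pi*(r^Suc n * \<bar>sin(2*pi*real (Suc n)*t)\<bar> / real (Suc n))"
      unfolding f'eq using assms by (simp add: abs_mult)
    also have "\<dots> \<le> 2*pi*(r^Suc n * 1 / 1)"
      using assms by (intro mult_left_mono divide_mono mult_left_mono) auto
    finally show ?thesis by simp
  qed
  have sm: "summable (\<lambda>n. 2*pi*r^Suc n)"
    using assms by (intro summable_mult summable_ignore_initial_segment[where k=1, simplified]) auto
  have ul: "uniform_limit UNIV (\<lambda>n x. \<Sum>i<n. f' i x) (\<lambda>x. suminf (\<lambda>i. f' i x)) sequentially"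
    by (rule Weierstrass_m_test[OF _ sm]) (use bnd in auto)
  have is2: "summable (\<lambda>n. 1 / (real (Suc n))^2)"
    using inverse_squares_sums by (simp add: sums_iff)
  have s0: "summable (\<lambda>n. f n 0)"
  proof (rule summable_comparison_test'[OF is2, of 0])
    fix n :: nat
    have "r^Suc n \<le> 1" using assms by (intro power_le_one) auto
    moreover have "f n 0 = r^Suc n / (real (Suc n))^2" unfolding f_def by (simp only: mult_zero_right cos_zero mult_1_right)
    moreover have "r^Suc n \<ge> 0" using assms by simp
    ultimately show "norm (f n 0) \<le> 1 / (real (Suc n))^2"
      by (simp only: real_norm_def abs_of_nonneg divide_nonneg_nonneg zero_le_power2, intro divide_right_mono) auto
  qed
  obtain g where g: "\<And>x. (\<lambda>n. f n x) sums g x"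
    "\<And>x. (g has_field_derivative (suminf (\<lambda>i. f' i x))) (at x within UNIV)"
    using has_field_derivative_series[OF convex_UNIV der ul _ s0] by blast
  have "Gs r = g"
  proof
    fix x
    have "suminf (\<lambda>n. f n x) = g x" using g(1)[of x] by (simp add: sums_iff)
    thus "Gs r x = g x" unfolding Gs_def f_def by simp
  qed
  moreover have "suminf (\<lambda>i. f' i t) = 2*pi*Im(ln(1 - of_real r * ee t))"
    unfolding f'eq using sums_mult[OF sin_series[OF assms, of t], of "-(2*pi)"] by (simp add: sums_iff)
  ultimately show ?thesis using g(2)[of t] by simp
qed

lemma Gs_integral:
  assumes "0 \<le> r" "r < 1" "0 \<le> t"
  shows "((\<lambda>u. 2*pi*Im(ln(1 - of_real r * ee u))) has_integral (Gs r t - Gs r 0)) {0..t}"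
  by (rule fundamental_theorem_of_calculus[OF assms(3)])
     (use Gs_deriv[OF assms(1,2)] in \<open>auto simp: has_real_derivative_iff_has_vector_derivative[symmetric] intro: has_field_derivative_at_within\<close>)

lemma Im_ln_one_minus_ee:
  assumes "0 < u" "u < 1"
  shows "Im (ln (1 - ee u)) = pi*u - pi/2"
proof -
  have sp: "sin (pi*u) > 0" using assms by (intro sin_gt_zero) auto
  have "1 - ee u = rcis (2 * sin (pi*u)) (pi*u - pi/2)"
  proof (rule complex_eqI)
    have "cos (2*(pi*u)) = 1 - 2 * sin (pi*u) ^ 2" by (rule cos_double_sin)
    moreover have "sin (2*(pi*u)) = 2 * sin (pi*u) * cos (pi*u)" by (rule sin_double)
    ultimately show "Re (1 - ee u) = Re (rcis (2 * sin (pi*u)) (pi*u - pi/2))"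
      "Im (1 - ee u) = Im (rcis (2 * sin (pi*u)) (pi*u - pi/2))"
      by (simp_all add: ee_cis rcis_def cos_diff sin_diff power2_eq_square mult_ac)
  qed
  moreover have "pi*u - pi/2 \<in> {-pi<..pi}"
  proof -
    have a: "pi*u > 0" using assms by auto
    have b: "pi*u < pi" using assms by auto
    show ?thesis unfolding greaterThanAtMost_iff using a b by linarith
  qed
  ultimately show ?thesis using Ln_rcis[of "2 * sin (pi*u)" "pi*u - pi/2"] sp by simp
qed

definition rr :: "nat \<Rightarrow> real" where "rr n = 1 - inverse (real (Suc n)) / 2"

lemma rr_bounds: "0 \<le> rr n" "rr n < 1"
  unfolding rr_def by (auto simp: field_simps)

lemma rr_lim: "rr \<longlonglongrightarrow> 1"
proof -
  have "(\<lambda>n. 1 - inverse (real (Suc n)) / 2) \<longlonglongrightarrow> 1 - 0 / 2"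
    by (intro tendsto_intros LIMSEQ_inverse_real_of_nat) simp_all
  thus ?thesis unfolding rr_def[abs_def] by simp
qed

lemma Gs_lim: "(\<lambda>k. Gs (rr k) t) \<longlonglongrightarrow> Gs 1 t"
proof -
  have is2: "summable (\<lambda>n. 1 / (real (Suc n))^2)"
    using inverse_squares_sums by (simp add: sums_iff)
  have lim: "(\<lambda>k. rr k ^ Suc n * cos(2*pi*real(Suc n)*t) / (real(Suc n))^2) \<longlonglongrightarrow>
      1 ^ Suc n * cos(2*pi*real(Suc n)*t) / (real(Suc n))^2" for n
    by (intro tendsto_intros rr_lim) simp
  have bnd: "norm (rr k ^ Suc n * cos(2*pi*real(Suc n)*t) / (real(Suc n))^2) \<le> 1 / (real (Suc n))^2" for n k
  proof -
    have "\<bar>rr k ^ Suc n\<bar> \<le> 1" using rr_bounds[of k]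
      by (simp add: power_le_one abs_of_nonneg del: power_Suc)
    moreover have "\<bar>cos(2*pi*real(Suc n)*t)\<bar> \<le> 1" by (rule abs_cos_le_one)
    ultimately have "\<bar>rr k ^ Suc n * cos(2*pi*real(Suc n)*t)\<bar> \<le> 1"
      by (simp add: abs_mult mult_le_one del: power_Suc)
    thus ?thesis by (simp add: divide_right_mono del: power_Suc)
  qed
  have "((\<lambda>k. suminf (\<lambda>n. rr k ^ Suc n * cos(2*pi*real(Suc n)*t) / (real(Suc n))^2)) \<longlongrightarrow>
      suminf (\<lambda>n. 1 ^ Suc n * cos(2*pi*real(Suc n)*t) / (real(Suc n))^2)) sequentially"
  proof (rule conjunct2[OF conjunct2[OF tannerys_theorem[OF lim _ is2]]])
    show "\<forall>\<^sub>F (n, k) in sequentially \<times>\<^sub>F sequentially.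
      norm (rr k ^ Suc n * cos(2*pi*real(Suc n)*t) / (real(Suc n))^2) \<le> 1 / (real (Suc n))^2"
      using bnd by (intro always_eventually) auto
  qed simp
  thus ?thesis unfolding Gs_def by simp
qed

lemma Re_one_minus_pos:
  assumes "0 \<le> r" "r < 1"
  shows "Re (1 - of_real r * ee u) > 0"
proof -
  have "r * cos (2*pi*u) \<le> r * 1" using assms by (intro mult_left_mono) auto
  thus ?thesis using assms by (simp add: ee_cis)
qed

lemma not_nonpos_of_Re: "Re z > 0 \<Longrightarrow> z \<notin> \<real>\<^sub>\<le>\<^sub>0"
  using complex_nonpos_Reals_iff by auto

lemma B2_series:
  assumes "0 \<le> t" "t < 1"
  shows "(\<lambda>n. cos(2*pi*real(Suc n)*t) / (real(Suc n))^2) sums (pi^2*(t^2 - t + 1/6))"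
proof -
  define fk where "fk k u = 2*pi*Im(ln(1 - of_real(rr k) * ee u))" for k u
  define gl where "gl u = (if u = 0 then 0 else 2*pi*(pi*u - pi/2))" for u
  have intk: "(fk k has_integral (Gs (rr k) t - Gs (rr k) 0)) {0..t}" for k
    unfolding fk_def by (rule Gs_integral[OF rr_bounds assms(1)])
  have int1: "\<And>k. fk k integrable_on {0..t}" using intk by (rule has_integral_integrable)
  have int2: "(\<lambda>u. 2*pi*pi) integrable_on {0..t}"
    by (rule integrable_continuous_interval) (intro continuous_intros)
  have le: "norm (fk k u) \<le> 2*pi*pi" for k u
  proof -
    have nz: "1 - of_real(rr k) * ee u \<noteq> 0"
      using Re_one_minus_pos[OF rr_bounds, of k u] by force
    have "\<bar>Im(ln(1 - of_real(rr k) * ee u))\<bar> \<le> pi"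
      using mpi_less_Im_Ln[OF nz] Im_Ln_le_pi[OF nz] by (simp add: abs_le_iff less_imp_le)
    thus ?thesis unfolding fk_def by (simp add: abs_mult)
  qed
  have conv: "(\<lambda>k. fk k u) \<longlonglongrightarrow> gl u" if u: "u \<in> {0..t}" for u
  proof (cases "u = 0")
    case True
    have "fk k u = 0" for k
    proof -
      have e: "1 - of_real(rr k) * ee u = of_real (1 - rr k)" using True by (simp add: ee_def)
      have pos: "1 - rr k > 0" using rr_bounds[of k] by simp
      show ?thesis unfolding fk_def e Ln_of_real[OF pos] by simp
    qed
    thus ?thesis using True by (simp add: gl_def)
  next
    case False
    hence u01: "0 < u" "u < 1" using u assms by auto
    have "Re (1 - ee u) > 0"
    proof -
      have "cos (2*(pi*u)) = 1 - 2 * sin (pi*u) ^ 2" by (rule cos_double_sin)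
      moreover have "sin (pi*u) > 0" using u01 by (intro sin_gt_zero) auto
      ultimately show ?thesis by (simp add: ee_cis mult_ac)
    qed
    hence ic: "isCont ln (1 - ee u)" by (intro continuous_at_Ln not_nonpos_of_Re)
    have "(\<lambda>k. 1 - of_real (rr k) * ee u) \<longlonglongrightarrow> 1 - of_real 1 * ee u"
      by (intro tendsto_intros rr_lim)
    hence "(\<lambda>k. ln (1 - of_real (rr k) * ee u)) \<longlonglongrightarrow> ln (1 - ee u)"
      using isCont_tendsto_compose[OF ic] by simp
    hence "(\<lambda>k. fk k u) \<longlonglongrightarrow> 2*pi*Im (ln (1 - ee u))"
      unfolding fk_def by (rule tendsto_mult_left[OF tendsto_Im])
    thus ?thesis using Im_ln_one_minus_ee[OF u01] False by (simp add: gl_def)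
  qed
  have "(\<lambda>k. integral {0..t} (fk k)) \<longlonglongrightarrow> integral {0..t} gl"
    by (rule dominated_convergence(2)[OF int1 int2 le conv])
  moreover have "integral {0..t} (fk k) = Gs (rr k) t - Gs (rr k) 0" for k
    using intk by (rule integral_unique)
  ultimately have l1: "(\<lambda>k. Gs (rr k) t - Gs (rr k) 0) \<longlonglongrightarrow> integral {0..t} gl" by simp
  have l2: "(\<lambda>k. Gs (rr k) t - Gs (rr k) 0) \<longlonglongrightarrow> Gs 1 t - Gs 1 0"
    by (intro tendsto_intros Gs_lim)
  have "((\<lambda>u. 2*pi*(pi*u - pi/2)) has_integral ((pi^2*t^2 - pi^2*t) - (pi^2*0^2 - pi^2*0))) {0..t}"
  proof (rule fundamental_theorem_of_calculus[OF assms(1)])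
    fix x assume "x \<in> {0..t}"
    have "((\<lambda>u. pi^2*u^2 - pi^2*u) has_real_derivative (2*pi*(pi*x - pi/2))) (at x)"
      by (auto intro!: derivative_eq_intros simp: power2_eq_square algebra_simps)
    thus "((\<lambda>u. pi^2*u^2 - pi^2*u) has_vector_derivative (2*pi*(pi*x - pi/2))) (at x within {0..t})"
      by (simp add: has_real_derivative_iff_has_vector_derivative[symmetric] has_field_derivative_at_within)
  qed
  hence hi: "((\<lambda>u. 2*pi*(pi*u - pi/2)) has_integral (pi^2*t^2 - pi^2*t)) {0..t}" by simp
  have "(gl has_integral (pi^2*t^2 - pi^2*t)) {0..t}"
    by (rule has_integral_spike_finite[OF _ _ hi, of "{0}"]) (auto simp: gl_def)
  hence "integral {0..t} gl = pi^2*t^2 - pi^2*t" by (rule integral_unique)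
  hence eq1: "Gs 1 t - Gs 1 0 = pi^2*t^2 - pi^2*t" using LIMSEQ_unique[OF l2 l1] by simp
  have "Gs 1 0 = pi^2/6"
  proof -
    have "(\<lambda>n. 1 / (real (Suc n))^2) sums (pi^2/6)" using inverse_squares_sums by simp
    moreover have "Gs 1 0 = (\<Sum>n. 1 / (real (Suc n))^2)" unfolding Gs_def by simp
    ultimately show ?thesis by (simp add: sums_iff)
  qed
  hence "Gs 1 t = pi^2*(t^2 - t + 1/6)" using eq1 by (simp add: algebra_simps)
  moreover have "summable (\<lambda>n. cos(2*pi*real(Suc n)*t) / (real(Suc n))^2)"
  proof (rule summable_comparison_test'[of "\<lambda>n. 1 / (real (Suc n))^2" 0])
    show "summable (\<lambda>n. 1 / (real (Suc n))^2)"
      using inverse_squares_sums by (simp add: sums_iff)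
    fix n :: nat
    show "norm (cos(2*pi*real(Suc n)*t) / (real(Suc n))^2) \<le> 1 / (real (Suc n))^2"
    proof -
      have "\<bar>cos(2*pi*real(Suc n)*t)\<bar> \<le> 1" by (rule abs_cos_le_one)
      thus ?thesis by (simp add: abs_divide divide_right_mono del: of_nat_Suc)
    qed
  qed
  moreover have "Gs 1 t = (\<Sum>n. cos(2*pi*real(Suc n)*t) / (real(Suc n))^2)" unfolding Gs_def by simp
  ultimately show ?thesis by (simp add: sums_iff)
qed

definition PP :: "real \<Rightarrow> real" where
  "PP y = ((frac y)^2 - frac y)/2 + 1/12"

lemma cos_shift_int: "cos ((x::real) + 2*pi * of_int (m::int)) = cos x"
proof -
  have a: "cos (2 * pi * of_int m) = 1" by (rule cos_int_2pin)
  have b: "sin (2 * pi * of_int m) = 0" by (rule sin_int_2pin)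
  show ?thesis using a b by (simp add: cos_add)
qed

lemma cos_frac: "cos (2*pi*real k*frac y) = cos (2*pi*real k*y)"
proof -
  have "2*pi*real k*y = 2*pi*real k*frac y + 2*pi * of_int (int k * floor y)"
    by (simp add: frac_def algebra_simps)
  thus ?thesis using cos_shift_int by metis
qed

lemma PP_series:
  "(\<lambda>n. cos(2*pi*real(Suc n)*y) / (2*pi^2*(real(Suc n))^2)) sums PP y"
proof -
  have "(\<lambda>n. cos(2*pi*real(Suc n)*frac y) / (real(Suc n))^2) sums (pi^2*((frac y)^2 - frac y + 1/6))"
    by (rule B2_series) (auto simp: frac_lt_1)
  hence "(\<lambda>n. cos(2*pi*real(Suc n)*y) / (real(Suc n))^2) sums (pi^2*((frac y)^2 - frac y + 1/6))"
    by (simp only: cos_frac)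
  hence "(\<lambda>n. cos(2*pi*real(Suc n)*y) / (real(Suc n))^2 / (2*pi^2)) sums (pi^2*((frac y)^2 - frac y + 1/6) / (2*pi^2))"
    by (rule sums_divide)
  moreover have "pi^2*((frac y)^2 - frac y + 1/6) / (2*pi^2) = PP y"
    unfolding PP_def by (simp add: field_simps)
  ultimately show ?thesis by (simp add: mult_ac)
qed

lemma psi_lower:
  assumes "0 < dl" "dl < 1"
  shows "psi y \<ge> (PP (y + dl) - PP y)/dl - dl/2"
proof -
  define s where "s = frac y"
  have s: "0 \<le> s" "s < 1" "y - s \<in> \<int>" unfolding s_def by (simp_all add: frac_lt_1) (simp add: frac_def)
  show ?thesis
  proof (cases "s + dl < 1")
    case True
    have "frac (y + dl) = s + dl"
      unfolding frac_unique_iff using s True assms by (auto simp: algebra_simps)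
    thus ?thesis unfolding PP_def psi_def s_def[symmetric] using assms
      by (simp add: field_simps power2_eq_square)
  next
    case False
    have "y + dl - (s + dl - 1) = (y - s) + 1" by simp
    also have "\<dots> \<in> \<int>" by (intro Ints_add s(3) Ints_1)
    finally have fr: "frac (y + dl) = s + dl - 1"
      unfolding frac_unique_iff using s False assms by auto
    have "(PP (y + dl) - PP y)/dl = s + dl/2 - 1/2 + (1 - s - dl)/dl"
      unfolding PP_def s_def[symmetric] fr using assms by (simp add: field_simps power2_eq_square)
    moreover have "(1 - s - dl)/dl \<le> 0" using False assms by (simp add: divide_nonpos_pos)
    ultimately show ?thesis unfolding psi_def s_def[symmetric] by simp
  qed
qed

lemma psi_upper:
  assumes "0 < dl" "dl < 1"
  shows "psi y \<le> (PP y - PP (y - dl))/dl + dl/2"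
proof -
  define s where "s = frac y"
  have s: "0 \<le> s" "s < 1" "y - s \<in> \<int>" unfolding s_def by (simp_all add: frac_lt_1) (simp add: frac_def)
  show ?thesis
  proof (cases "s - dl \<ge> 0")
    case True
    have fr: "frac (y - dl) = s - dl"
      unfolding frac_unique_iff using s True assms by (auto simp: algebra_simps)
    show ?thesis unfolding PP_def psi_def s_def[symmetric] fr using assms
      by (simp add: field_simps power2_eq_square)
  next
    case False
    have "y - dl - (s - dl + 1) = (y - s) - 1" by simp
    also have "\<dots> \<in> \<int>" by (intro Ints_diff s(3) Ints_1)
    finally have fr: "frac (y - dl) = s - dl + 1"
      unfolding frac_unique_iff using s False assms by auto
    have "(PP y - PP (y - dl))/dl = s - dl/2 - 1/2 + (1 - s/dl)"
      unfolding PP_def s_def[symmetric] fr using assms by (simp add: field_simps power2_eq_square)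
    moreover have "1 - s/dl \<ge> 0" using False assms by (simp add: field_simps)
    ultimately show ?thesis unfolding psi_def s_def[symmetric] by simp
  qed
qed

lemma cmod_ee_minus_one: "cmod (ee th - 1) = 2 * \<bar>sin (pi * th)\<bar>"
proof -
  have "(cmod (ee th - 1))^2 = (cos (2*pi*th) - 1)^2 + (sin (2*pi*th))^2"
    by (simp add: cmod_power2 ee_cis)
  also have "\<dots> = 2 - 2 * cos (2*(pi*th))"
    by (simp add: power2_eq_square algebra_simps)
  also have "\<dots> = (2 * \<bar>sin (pi * th)\<bar>)^2"
    by (simp add: cos_double_sin power2_eq_square)
  finally show ?thesis
    by (metis abs_of_nonneg norm_ge_zero power2_eq_imp_eq abs_ge_zero mult_nonneg_nonneg zero_le_numeral)
qed

lemma cmod_ee_minus_one_le2: "cmod (ee th - 1) \<le> 2"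
  unfolding cmod_ee_minus_one using abs_sin_le_one[of "pi*th"] by simp

lemma cmod_ee_minus_one_le: "cmod (ee th - 1) \<le> 2 * pi * \<bar>th\<bar>"
  unfolding cmod_ee_minus_one using abs_sin_x_le_abs_x[of "pi*th"] by (simp add: abs_mult)

lemma Re_ee: "Re (ee th) = cos (2*pi*th)"
  by (simp add: ee_cis)

lemma ee_add: "ee (a + b) = ee a * ee b"
  by (simp add: ee_def distrib_left exp_add)

definition Sx :: "'a set \<Rightarrow> ('a \<Rightarrow> real) \<Rightarrow> nat \<Rightarrow> complex" where
  "Sx J y k = (\<Sum>j\<in>J. ee (real k * y j))"

definition cw :: "real \<Rightarrow> nat \<Rightarrow> real" where
  "cw dl k = min (1/(pi*real k)) (1/(pi^2*(real k)^2*dl))"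

lemma cmod_Sx_le: "cmod (Sx J y k) \<le> card J"
proof -
  have "cmod (Sx J y k) \<le> (\<Sum>j\<in>J. cmod (ee (real k * y j)))"
    unfolding Sx_def by (rule norm_sum)
  also have "\<dots> = (\<Sum>j\<in>J. 1)" by (simp add: ee_cis)
  finally show ?thesis by simp
qed

lemma cw_nonneg: "dl > 0 \<Longrightarrow> cw dl k \<ge> 0"
  unfolding cw_def by simp

lemma summable_cw:
  assumes "dl > 0"
  shows "summable (\<lambda>n. cw dl (Suc n) * cmod (Sx J y (Suc n)))"
proof (rule summable_comparison_test'[of "\<lambda>n. (card J / (pi^2*dl)) * (1 / (real (Suc n))^2)" 0])
  show "summable (\<lambda>n. (card J / (pi^2*dl)) * (1 / (real (Suc n))^2))"
    using inverse_squares_sums by (intro summable_mult) (simp add: sums_iff)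
  fix n :: nat
  have "cw dl (Suc n) \<le> 1/(pi^2*(real (Suc n))^2*dl)" unfolding cw_def by simp
  hence "cw dl (Suc n) * cmod (Sx J y (Suc n)) \<le> 1/(pi^2*(real (Suc n))^2*dl) * card J"
    using cmod_Sx_le cw_nonneg[OF assms] assms by (intro mult_mono) auto
  thus "norm (cw dl (Suc n) * cmod (Sx J y (Suc n))) \<le> (card J / (pi^2*dl)) * (1 / (real (Suc n))^2)"
    using cw_nonneg[OF assms] by (simp add: abs_mult field_simps)
qed

lemma shift_sum_bound:
  assumes "finite J" "dl > 0" "\<bar>sg\<bar> \<le> dl"
  shows "\<bar>\<Sum>j\<in>J. PP (y j + sg) - PP (y j)\<bar> \<le> dl * (\<Sum>n. cw dl (Suc n) * cmod (Sx J y (Suc n)))"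
proof -
  define T where "T n = Re ((ee (real (Suc n) * sg) - 1) * Sx J y (Suc n)) / (2*pi^2*(real (Suc n))^2)" for n
  have ser: "(\<lambda>n. cos(2*pi*real(Suc n)*(y j + sg)) / (2*pi^2*(real(Suc n))^2)
      - cos(2*pi*real(Suc n)*y j) / (2*pi^2*(real(Suc n))^2)) sums (PP (y j + sg) - PP (y j))" for j
    by (intro sums_diff PP_series)
  have "(\<lambda>n. \<Sum>j\<in>J. cos(2*pi*real(Suc n)*(y j + sg)) / (2*pi^2*(real(Suc n))^2)
      - cos(2*pi*real(Suc n)*y j) / (2*pi^2*(real(Suc n))^2)) sums (\<Sum>j\<in>J. PP (y j + sg) - PP (y j))"
    by (rule sums_sum[OF ser])
  moreover have "(\<Sum>j\<in>J. cos(2*pi*real(Suc n)*(y j + sg)) / (2*pi^2*(real(Suc n))^2)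
      - cos(2*pi*real(Suc n)*y j) / (2*pi^2*(real(Suc n))^2)) = T n" for n
  proof -
    have "Re ((ee (real (Suc n) * sg) - 1) * Sx J y (Suc n))
        = (\<Sum>j\<in>J. Re (ee (real (Suc n) * sg + real (Suc n) * y j) - ee (real (Suc n) * y j)))"
      unfolding Sx_def sum_distrib_left Re_sum ee_add by (simp add: algebra_simps)
    also have "\<dots> = (\<Sum>j\<in>J. cos(2*pi*real(Suc n)*(y j + sg)) - cos(2*pi*real(Suc n)*y j))"
      by (simp add: Re_ee algebra_simps)
    finally show ?thesis unfolding T_def by (simp add: sum_divide_distrib diff_divide_distrib)
  qed
  ultimately have Ts: "T sums (\<Sum>j\<in>J. PP (y j + sg) - PP (y j))" by simp
  have Tb: "norm (T n) \<le> dl * (cw dl (Suc n) * cmod (Sx J y (Suc n)))" for n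
  proof -
    define k where "k = real (Suc n)"
    have k: "k \<ge> 1" unfolding k_def by simp
    define E where "E = cmod (ee (k * sg) - 1)"
    have E1: "E \<le> 2" unfolding E_def by (rule cmod_ee_minus_one_le2)
    have E2: "E \<le> 2*pi*k*dl"
    proof -
      have "E \<le> 2*pi*\<bar>k * sg\<bar>" unfolding E_def by (rule cmod_ee_minus_one_le)
      also have "\<dots> \<le> 2*pi*(k*dl)" using k assms by (simp add: abs_mult mult_left_mono)
      finally show ?thesis by simp
    qed
    have "norm (T n) \<le> E * cmod (Sx J y (Suc n)) / (2*pi^2*k^2)"
    proof -
      have "\<bar>Re ((ee (k * sg) - 1) * Sx J y (Suc n))\<bar> \<le> E * cmod (Sx J y (Suc n))"
        unfolding E_def using abs_Re_le_cmod[of "(ee (k * sg) - 1) * Sx J y (Suc n)"] by (simp add: norm_mult)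
      thus ?thesis unfolding T_def k_def[symmetric] by (simp add: abs_divide divide_right_mono)
    qed
    also have "\<dots> \<le> dl * cw dl (Suc n) * cmod (Sx J y (Suc n))"
    proof -
      have "E / (2*pi^2*k^2) \<le> dl * cw dl (Suc n)"
      proof -
        have a: "E / (2*pi^2*k^2) \<le> dl * (1/(pi*k))"
          using E2 k by (simp add: field_simps power2_eq_square)
        have b: "E / (2*pi^2*k^2) \<le> dl * (1/(pi^2*k^2*dl))"
          using E1 k assms by (simp add: field_simps power2_eq_square)
        show ?thesis unfolding cw_def k_def[symmetric] using a b assms by (simp add: min_def)
      qed
      hence "E / (2*pi^2*k^2) * cmod (Sx J y (Suc n)) \<le> dl * cw dl (Suc n) * cmod (Sx J y (Suc n))"
        by (intro mult_right_mono) auto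
      thus ?thesis by simp
    qed
    finally show ?thesis by (simp add: mult_ac)
  qed
  have sT: "summable (\<lambda>n. norm (T n))"
  proof (rule summable_comparison_test'[OF summable_mult[OF summable_cw[OF assms(2)], of dl], where N=0])
    fix n :: nat show "norm (norm (T n)) \<le> dl * (cw dl (Suc n) * cmod (Sx J y (Suc n)))" using Tb[of n] by simp
  qed
  have "\<bar>\<Sum>j\<in>J. PP (y j + sg) - PP (y j)\<bar> = norm (suminf T)" using Ts by (simp add: sums_iff)
  also have "\<dots> \<le> (\<Sum>n. norm (T n))" by (rule summable_norm[OF sT])
  also have "\<dots> \<le> (\<Sum>n. dl * (cw dl (Suc n) * cmod (Sx J y (Suc n))))"
    by (rule suminf_le[OF Tb sT summable_mult[OF summable_cw[OF assms(2)]]])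
  also have "\<dots> = dl * (\<Sum>n. cw dl (Suc n) * cmod (Sx J y (Suc n)))"
    by (rule suminf_mult[OF summable_cw[OF assms(2)]])
  finally show ?thesis .
qed

lemma psi_sum_bound:
  fixes dl :: real
  assumes "finite J" "0 < dl" "dl < 1"
  shows "\<bar>\<Sum>j\<in>J. psi (y j)\<bar> \<le> card J * dl / 2 + (\<Sum>n. cw dl (Suc n) * cmod (Sx J y (Suc n)))"
proof -
  define B where "B = (\<Sum>n. cw dl (Suc n) * cmod (Sx J y (Suc n)))"
  have lo: "(\<Sum>j\<in>J. psi (y j)) \<ge> - B - card J * dl / 2"
  proof -
    have "(\<Sum>j\<in>J. psi (y j)) \<ge> (\<Sum>j\<in>J. (PP (y j + dl) - PP (y j))/dl - dl/2)"
      by (intro sum_mono psi_lower assms)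
    also have "(\<Sum>j\<in>J. (PP (y j + dl) - PP (y j))/dl - dl/2) = (\<Sum>j\<in>J. PP (y j + dl) - PP (y j))/dl - card J * dl/2"
      by (simp add: sum_subtractf sum_divide_distrib[symmetric])
    moreover have "\<bar>\<Sum>j\<in>J. PP (y j + dl) - PP (y j)\<bar> \<le> dl * B"
      unfolding B_def using assms by (intro shift_sum_bound) auto
    hence "(\<Sum>j\<in>J. PP (y j + dl) - PP (y j))/dl \<ge> -B"
      using assms by (simp add: abs_le_iff field_simps)
    ultimately show ?thesis by linarith
  qed
  have up: "(\<Sum>j\<in>J. psi (y j)) \<le> B + card J * dl / 2"
  proof -
    have "(\<Sum>j\<in>J. psi (y j)) \<le> (\<Sum>j\<in>J. (PP (y j) - PP (y j - dl))/dl + dl/2)"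
      by (intro sum_mono psi_upper assms)
    also have "(\<Sum>j\<in>J. (PP (y j) - PP (y j - dl))/dl + dl/2) = - (\<Sum>j\<in>J. PP (y j + (-dl)) - PP (y j))/dl + card J * dl/2"
      by (simp add: sum.distrib sum_subtractf sum_divide_distrib[symmetric] minus_divide_left)
    moreover have "\<bar>\<Sum>j\<in>J. PP (y j + (-dl)) - PP (y j)\<bar> \<le> dl * B"
      unfolding B_def using assms by (intro shift_sum_bound) auto
    hence "- (\<Sum>j\<in>J. PP (y j + (-dl)) - PP (y j))/dl \<le> B"
      using assms by (simp add: abs_le_iff field_simps)
    ultimately show ?thesis by linarith
  qed
  show ?thesis using lo up unfolding B_def[symmetric] by linarith
qed

lemma mvt_powr:
  fixes j a :: real
  assumes "1 < j" "a \<le> 1"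
  shows "\<exists>z. j - 1 < z \<and> z < j \<and> j powr a - (j-1) powr a = a * z powr (a-1) \<and> z powr (a-1) \<ge> j powr (a-1)"
proof -
  have "\<exists>z. j - 1 < z \<and> z < j \<and> j powr a - (j-1) powr a = (j - (j-1)) * (a * z powr (a-1))"
    by (rule MVT2) (use assms in \<open>auto intro!: has_real_derivative_powr\<close>)
  then obtain z where z: "j - 1 < z" "z < j" "j powr a - (j-1) powr a = a * z powr (a-1)" by auto
  have "z powr (a-1) \<ge> j powr (a-1)" using z assms by (intro powr_mono2') auto
  thus ?thesis using z by blast
qed

lemma powr_step_pos:
  fixes j a :: real
  assumes "1 < j" "0 < a" "a \<le> 1"
  shows "a * j powr (a-1) \<le> j powr a - (j-1) powr a"
  using mvt_powr[OF assms(1,3)] assms by (metis mult_left_mono less_imp_le)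

lemma powr_step_neg:
  fixes j a :: real
  assumes "1 < j" "a < 0"
  shows "(-a) * j powr (a-1) \<le> (j-1) powr a - j powr a"
proof -
  have a1: "a \<le> 1" using assms by simp
  obtain z where z: "j powr a - (j-1) powr a = a * z powr (a-1)" "z powr (a-1) \<ge> j powr (a-1)"
    using mvt_powr[OF assms(1) a1] by blast
  have "(-a) * j powr (a-1) \<le> (-a) * z powr (a-1)" using z assms by (intro mult_left_mono) auto
  thus ?thesis using z by simp
qed

lemma ln_step:
  fixes j :: real
  assumes "1 < j"
  shows "1 / j \<le> ln j - ln (j-1)"
proof -
  have "\<exists>z. j - 1 < z \<and> z < j \<and> ln j - ln (j-1) = (j - (j-1)) * (1/z)"
    by (rule MVT2) (use assms in \<open>auto intro!: derivative_eq_intros simp: field_simps\<close>)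
  then obtain z where z: "j - 1 < z" "z < j" "ln j - ln (j-1) = 1/z" by auto
  have "1/j \<le> 1/z" using z assms by (intro divide_left_mono) auto
  thus ?thesis using z by simp
qed

lemma head_sum_pos:
  fixes ka :: real
  assumes "0 < ka" "ka \<le> 1"
  shows "(\<Sum>n<H. real (Suc n) powr (ka - 1)) \<le> real H powr ka / ka"
proof (induction H)
  case 0
  then show ?case by simp
next
  case (Suc H)
  have step: "real (Suc H) powr (ka - 1) \<le> (real (Suc H) powr ka - real H powr ka) / ka"
  proof (cases "H = 0")
    case True
    thus ?thesis using assms by (simp add: field_simps)
  next
    case False
    have "ka * real (Suc H) powr (ka - 1) \<le> real (Suc H) powr ka - (real (Suc H) - 1) powr ka"
      using False assms by (intro powr_step_pos) auto
    thus ?thesis using assms by (simp add: field_simps)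
  qed
  have "(\<Sum>n<Suc H. real (Suc n) powr (ka - 1)) = (\<Sum>n<H. real (Suc n) powr (ka - 1)) + real (Suc H) powr (ka - 1)"
    by simp
  also have "\<dots> \<le> real H powr ka / ka + (real (Suc H) powr ka - real H powr ka) / ka"
    using Suc.IH step by linarith
  also have "\<dots> = real (Suc H) powr ka / ka" using assms by (simp add: field_simps)
  finally show ?case .
qed

lemma head_sum_zero:
  assumes "H \<ge> 1"
  shows "(\<Sum>n<H. 1 / real (Suc n)) \<le> 1 + ln (real H)"
  using assms
proof (induction H rule: dec_induct)
  case base
  then show ?case by simp
next
  case (step H)
  have "1 / real (Suc H) \<le> ln (real (Suc H)) - ln (real (Suc H) - 1)"
    using step by (intro ln_step) auto
  hence "1 / real (Suc H) \<le> ln (real (Suc H)) - ln (real H)" by simp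
  thus ?case using step.IH by simp
qed

lemma tail_sum:
  fixes ka :: real
  assumes "ka < 1" "H \<ge> 1"
  shows "summable (\<lambda>n. real (n + H + 1) powr (ka - 2))"
    "(\<Sum>n. real (n + H + 1) powr (ka - 2)) \<le> real H powr (ka - 1) / (1 - ka)"
proof -
  define f where "f n = real (n + H) powr (ka - 1) / (1 - ka)" for n
  have "filterlim (\<lambda>n. real (n + H)) at_top sequentially"
    by (intro filterlim_compose[OF filterlim_real_sequentially] filterlim_add_const_nat_at_top)
  hence "(\<lambda>n. real (n + H) powr (ka - 1)) \<longlonglongrightarrow> 0"
    using assms by (intro tendsto_neg_powr) auto
  hence "f \<longlonglongrightarrow> 0 / (1 - ka)"
    using tendsto_divide[OF _ tendsto_const[of "1 - ka"]] assms unfolding f_def by simp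
  hence ts: "(\<lambda>n. f n - f (Suc n)) sums (f 0)" using telescope_sums'[of f 0] by simp
  have le: "norm (real (n + H + 1) powr (ka - 2)) \<le> f n - f (Suc n)" for n
  proof -
    have "(-(ka - 1)) * real (n + H + 1) powr ((ka - 1) - 1) \<le> (real (n + H + 1) - 1) powr (ka - 1) - real (n + H + 1) powr (ka - 1)"
      using assms by (intro powr_step_neg) auto
    hence "(1 - ka) * real (n + H + 1) powr (ka - 2) \<le> real (n + H) powr (ka - 1) - real (Suc n + H) powr (ka - 1)"
      by (simp add: algebra_simps)
    thus ?thesis unfolding f_def using assms by (simp add: field_simps diff_divide_distrib[symmetric])
  qed
  show sm: "summable (\<lambda>n. real (n + H + 1) powr (ka - 2))"
    by (rule summable_comparison_test'[OF sums_summable[OF ts] le])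
  have "(\<Sum>n. real (n + H + 1) powr (ka - 2)) \<le> (\<Sum>n. f n - f (Suc n))"
    by (rule suminf_le[OF _ sm sums_summable[OF ts]]) (use le in auto)
  also have "\<dots> = f 0" using ts by (simp add: sums_iff)
  finally show "(\<Sum>n. real (n + H + 1) powr (ka - 2)) \<le> real H powr (ka - 1) / (1 - ka)"
    unfolding f_def by simp
qed

definition KK :: "real \<Rightarrow> nat \<Rightarrow> real" where
  "KK ka H = (if ka > 0 then real H powr ka / ka + 2 * real H powr ka else 3 + ln (real H))"

lemma cw_le1: "dl > 0 \<Longrightarrow> k \<ge> 1 \<Longrightarrow> cw dl k \<le> 1 / real k"
proof -
  assume "dl > 0" "k \<ge> 1"
  have "1/(pi*real k) \<le> 1 / real k" using \<open>k \<ge> 1\<close> pi_gt3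
    by (intro divide_left_mono) (auto simp: mult_pos_pos)
  thus ?thesis unfolding cw_def by linarith
qed

lemma cw_le2: "H \<ge> 1 \<Longrightarrow> k \<ge> 1 \<Longrightarrow> cw (1/(2*real H)) k \<le> real H / (real k)^2"
proof -
  assume a: "H \<ge> 1" "k \<ge> 1"
  have "1/(pi^2*(real k)^2*(1/(2*real H))) = 2 * real H / (pi^2 * (real k)^2)" using a by simp
  also have "\<dots> \<le> 2 * real H / (2 * (real k)^2)"
  proof (rule divide_left_mono)
    have "pi^2 \<ge> 3^2" using pi_gt3 by (intro power_mono) auto
    thus "2 * (real k)^2 \<le> pi^2 * (real k)^2" by (intro mult_right_mono) auto
  qed (use a in auto)
  also have "\<dots> = real H / (real k)^2" by simp
  finally show ?thesis unfolding cw_def by linarith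
qed

lemma weighted_bound:
  fixes ka A X Y :: real and H :: nat and S :: "nat \<Rightarrow> complex"
  assumes H: "H \<ge> 1" and ka: "0 \<le> ka" "ka \<le> 1/2" and pos: "A \<ge> 0" "X \<ge> 0" "Y \<ge> 0"
    and bnd: "\<And>k. k \<ge> 1 \<Longrightarrow> cmod (S k) \<le> A * (real k powr ka * X + Y / real k)"
    and sm: "summable (\<lambda>n. cw (1/(2*real H)) (Suc n) * cmod (S (Suc n)))"
  shows "(\<Sum>n. cw (1/(2*real H)) (Suc n) * cmod (S (Suc n))) \<le> A * X * KK ka H + 3 * A * Y"
proof -
  define dl where "dl = 1/(2*real H)"
  have dl: "dl > 0" unfolding dl_def using H by simp
  define b where "b n = (if n < H then real (Suc n) powr (ka-1) else real H * real (Suc n) powr (ka-2))" for n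
  have is2: "(\<lambda>n. 1 / (real (Suc n))^2) sums (pi^2/6)" using inverse_squares_sums by simp
  have bshift: "b (n + H) = real H * real (n + H + 1) powr (ka - 2)" for n
    unfolding b_def by simp
  have tl: "summable (\<lambda>n. real (n + H + 1) powr (ka - 2))"
    "(\<Sum>n. real (n + H + 1) powr (ka - 2)) \<le> real H powr (ka - 1) / (1 - ka)"
    using tail_sum[of ka H] ka H by auto
  have smb': "summable (\<lambda>n. b (n + H))" unfolding bshift by (intro summable_mult tl(1))
  hence smb: "summable b" by (subst summable_iff_shift[symmetric, of _ H])
  have "suminf b = (\<Sum>n. b (n + H)) + (\<Sum>n<H. b n)" by (rule suminf_split_initial_segment[OF smb])
  also have "(\<Sum>n. b (n + H)) = real H * (\<Sum>n. real (n + H + 1) powr (ka - 2))"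
    unfolding bshift by (rule suminf_mult[OF tl(1)])
  also have "\<dots> \<le> real H * (real H powr (ka - 1) / (1 - ka))"
    by (intro mult_left_mono tl(2)) auto
  also have "\<dots> \<le> 2 * real H powr ka"
  proof -
    have "real H * real H powr (ka - 1) = real H powr ka"
      using H by (simp add: powr_diff powr_one_eq_one)
    moreover have "1 / (1 - ka) \<le> 2" using ka by (simp add: field_simps)
    moreover have "real H powr ka * (1 / (1 - ka)) \<le> real H powr ka * 2"
      using \<open>1 / (1 - ka) \<le> 2\<close> by (intro mult_left_mono) auto
    ultimately show ?thesis by (simp add: mult_ac)
  qed
  also have "(\<Sum>n<H. b n) = (\<Sum>n<H. real (Suc n) powr (ka-1))"
    unfolding b_def by simp
  finally have sb: "suminf b \<le> 2 * real H powr ka + (\<Sum>n<H. real (Suc n) powr (ka-1))" by simp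
  have sbK: "suminf b \<le> KK ka H"
  proof (cases "ka > 0")
    case True
    thus ?thesis using sb head_sum_pos[of ka H] ka unfolding KK_def by auto
  next
    case False
    hence "ka = 0" using ka by simp
    hence "(\<Sum>n<H. real (Suc n) powr (ka-1)) = (\<Sum>n<H. 1 / real (Suc n))"
      by (simp add: powr_minus_divide)
    thus ?thesis using sb head_sum_zero[OF H] \<open>ka = 0\<close> H unfolding KK_def by auto
  qed
  have trm: "cw dl (Suc n) * cmod (S (Suc n)) \<le> A * X * b n + A * Y * (1 / (real (Suc n))^2)" for n
  proof -
    define k where "k = real (Suc n)"
    have k: "k \<ge> 1" unfolding k_def by simp
    have c0: "cw dl (Suc n) \<ge> 0" by (rule cw_nonneg[OF dl])
    have c1: "cw dl (Suc n) \<le> 1 / k" unfolding k_def by (rule cw_le1[OF dl]) simp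
    have c2: "cw dl (Suc n) \<le> real H / k^2" unfolding k_def dl_def by (rule cw_le2[OF H]) simp
    have "cw dl (Suc n) * cmod (S (Suc n)) \<le> cw dl (Suc n) * (A * (k powr ka * X + Y / k))"
      unfolding k_def by (intro mult_left_mono bnd c0) simp
    also have "\<dots> = A * X * (cw dl (Suc n) * k powr ka) + A * Y * (cw dl (Suc n) / k)"
      by (simp add: algebra_simps)
    also have "\<dots> \<le> A * X * b n + A * Y * (1 / k^2)"
    proof (intro add_mono mult_left_mono)
      show "cw dl (Suc n) / k \<le> 1 / k^2"
        using divide_right_mono[OF c1, of k] k by (simp add: power2_eq_square)
      show "cw dl (Suc n) * k powr ka \<le> b n"
      proof (cases "n < H")
        case True
        have "cw dl (Suc n) * k powr ka \<le> (1 / k) * k powr ka" using c1 by (intro mult_right_mono) auto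
        also have "\<dots> = k powr (ka - 1)" using k by (simp add: powr_diff)
        finally show ?thesis using True unfolding b_def k_def by simp
      next
        case False
        have "cw dl (Suc n) * k powr ka \<le> (real H / k^2) * k powr ka" using c2 by (intro mult_right_mono) auto
        also have "\<dots> = real H * k powr (ka - 2)" using k by (simp add: powr_diff powr_numeral)
        finally show ?thesis using False unfolding b_def k_def by simp
      qed
    qed (use pos in auto)
    finally show ?thesis unfolding k_def .
  qed
  have "(\<Sum>n. cw dl (Suc n) * cmod (S (Suc n))) \<le> (\<Sum>n. A * X * b n + A * Y * (1 / (real (Suc n))^2))"
  proof (rule suminf_le[OF trm])
    show "summable (\<lambda>n. cw dl (Suc n) * cmod (S (Suc n)))" using sm unfolding dl_def .
    show "summable (\<lambda>n. A * X * b n + A * Y * (1 / (real (Suc n))^2))"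
      by (intro summable_add summable_mult smb sums_summable[OF is2])
  qed
  also have "\<dots> = A * X * suminf b + A * Y * (pi^2/6)"
    using sums_add[OF sums_mult[OF summable_sums[OF smb], of "A * X"] sums_mult[OF is2, of "A * Y"]]
    by (simp add: sums_iff)
  also have "\<dots> \<le> A * X * KK ka H + A * Y * 3"
  proof (intro add_mono mult_left_mono sbK)
    have "pi^2 \<le> 4^2" using pi_less_4 by (intro power_mono) auto
    thus "pi^2/6 \<le> 3" by simp
  qed (use pos in auto)
  finally show ?thesis unfolding dl_def by simp
qed

definition JJ :: "nat \<Rightarrow> real \<Rightarrow> nat set" where
  "JJ m D = {n::nat. D < real m * real n \<and> real m * real n \<le> 2*D}"

definition FF :: "real \<Rightarrow> nat \<Rightarrow> real \<Rightarrow> nat \<Rightarrow> real \<Rightarrow> real" where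
  "FF hx m dl j t = hx * (-1)^j * fact j * real m ^ j * (real m * t + dl) powr (-(real j + 1))"

lemma FF_deriv:
  assumes "real m * t + dl > 0"
  shows "(FF hx m dl j has_real_derivative FF hx m dl (Suc j) t) (at t)"
proof -
  define c where "c = hx * (-1)^j * fact j * real m ^ j"
  define p where "p = -(real j + 1)"
  have d1: "((\<lambda>t. real m * t + dl) has_real_derivative real m) (at t)"
    by (auto intro!: derivative_eq_intros)
  have d2: "((\<lambda>z. z powr p) has_real_derivative p * (real m * t + dl) powr (p - 1)) (at (real m * t + dl))"
    by (rule has_real_derivative_powr[OF assms])
  have "((\<lambda>t. (real m * t + dl) powr p) has_real_derivative (p * (real m * t + dl) powr (p - 1)) * real m) (at t)"
    by (rule DERIV_chain2[OF d2 d1])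
  hence "((\<lambda>t. c * (real m * t + dl) powr p) has_real_derivative c * ((p * (real m * t + dl) powr (p - 1)) * real m)) (at t)"
    by (rule DERIV_cmult)
  moreover have "FF hx m dl j = (\<lambda>t. c * (real m * t + dl) powr p)"
    unfolding FF_def c_def p_def by (simp add: fun_eq_iff)
  moreover have "c * ((p * (real m * t + dl) powr (p - 1)) * real m) = FF hx m dl (Suc j) t"
  proof -
    have e1: "p - 1 = -(real (Suc j) + 1)" unfolding p_def by simp
    have e2: "c * p * real m = hx * (-1)^(Suc j) * fact (Suc j) * real m ^ (Suc j)"
      unfolding c_def p_def by (simp add: algebra_simps fact_Suc)
    have "c * ((p * (real m * t + dl) powr (p - 1)) * real m) = (c * p * real m) * (real m * t + dl) powr (p - 1)"
      by (simp only: mult_ac)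
    also have "\<dots> = FF hx m dl (Suc j) t" unfolding e2 e1 FF_def ..
    finally show ?thesis .
  qed
  ultimately show ?thesis by simp
qed

lemma abs_FF:
  assumes "real m * t + dl > 0" "hx \<ge> 0"
  shows "\<bar>FF hx m dl j t\<bar> = fact j * (hx * real m ^ j) / (real m * t + dl) ^ (j + 1)"
proof -
  have a: "(real m * t + dl) powr (real (j+1)) = (real m * t + dl) ^ (j + 1)"
    using assms(1) by (rule powr_realpow)
  have "(real m * t + dl) powr (-(real j + 1)) = 1 / (real m * t + dl) powr (real j + 1)"
    by (rule powr_minus_divide)
  also have "\<dots> = 1 / (real m * t + dl) ^ (j + 1)" using a by (simp add: add.commute)
  finally have "(real m * t + dl) powr (-(real j + 1)) = 1 / (real m * t + dl) ^ (j + 1)" .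
  thus ?thesis unfolding FF_def using assms by (simp add: abs_mult power_abs)
qed

lemma expsum_bound:
  fixes ka la dl :: real
  assumes ep: "exponent_pair ka la" and dl: "dl \<ge> 0"
  shows "\<exists>C>0. \<forall>m x D h. 1 \<le> D \<longrightarrow> 1 \<le> m \<longrightarrow> real m \<le> D \<longrightarrow> 0 < x \<longrightarrow> 1 \<le> h \<longrightarrow>
     cmod (Sx (JJ m D) (\<lambda>n. x / (real m * real n + dl)) h)
       \<le> C * (real h powr ka * ((x * real m / D^2) powr ka * (D / real m) powr la) + (D^2 / (x * real m)) / real h)"
proof -
  from ep obtain r :: nat where r: "r \<ge> 1" and HH: "\<forall>A::real. A \<ge> 1 \<longrightarrow> (\<exists>C>0. \<forall>(N::real) (T::real) (a::real) (b::real) (Fd::nat \<Rightarrow> real \<Rightarrow> real).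
          N \<ge> 1 \<longrightarrow> T > 0 \<longrightarrow> N \<le> a \<longrightarrow> a \<le> b \<longrightarrow> b \<le> 2 * N \<longrightarrow>
          (\<forall>j<r. \<forall>t\<in>{a..b}. (Fd j has_real_derivative Fd (Suc j) t) (at t)) \<longrightarrow>
          (\<forall>j\<in>{1..r}. \<forall>t\<in>{a..b}. T / N ^ j / A \<le> \<bar>Fd j t\<bar> \<and> \<bar>Fd j t\<bar> \<le> A * T / N ^ j) \<longrightarrow>
          cmod (\<Sum>n\<in>{n::int. a < of_int n \<and> of_int n \<le> b}. ee (Fd 0 (of_int n)))
            \<le> C * ((T / N) powr ka * N powr la + N / T))"
    unfolding exponent_pair_def by blast
  define A where "A = fact r * (2 + dl)^(r+1)"
  have pw1: "(2 + dl)^(r+1) \<ge> 1" using dl by (intro one_le_power) auto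
  have fr1: "(fact r :: real) \<ge> 1" by simp
  have "1 * 1 \<le> (fact r :: real) * (2+dl)^(r+1)" by (rule mult_mono[OF fr1 pw1]) simp_all
  hence A1: "A \<ge> 1" unfolding A_def by simp
  obtain C where C: "C > 0" and CC: "\<forall>(N::real) (T::real) (a::real) (b::real) (Fd::nat \<Rightarrow> real \<Rightarrow> real).
          N \<ge> 1 \<longrightarrow> T > 0 \<longrightarrow> N \<le> a \<longrightarrow> a \<le> b \<longrightarrow> b \<le> 2 * N \<longrightarrow>
          (\<forall>j<r. \<forall>t\<in>{a..b}. (Fd j has_real_derivative Fd (Suc j) t) (at t)) \<longrightarrow>
          (\<forall>j\<in>{1..r}. \<forall>t\<in>{a..b}. T / N ^ j / A \<le> \<bar>Fd j t\<bar> \<and> \<bar>Fd j t\<bar> \<le> A * T / N ^ j) \<longrightarrow>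
          cmod (\<Sum>n\<in>{n::int. a < of_int n \<and> of_int n \<le> b}. ee (Fd 0 (of_int n)))
            \<le> C * ((T / N) powr ka * N powr la + N / T)"
    using HH A1 by blast
  show ?thesis
  proof (intro exI[of _ C] conjI allI impI)
    show "C > 0" by (rule C)
    fix m :: nat and x D :: real and h :: nat
    assume D1: "1 \<le> D" and m1: "1 \<le> m" and mD: "real m \<le> D" and x0: "0 < x" and h1: "1 \<le> h"
    define N where "N = D / real m"
    define T where "T = real h * x / D"
    define hx where "hx = real h * x"
    define Fd where "Fd = FF hx m dl"
    have m0: "real m > 0" using m1 by simp
    have N1: "N \<ge> 1" unfolding N_def using mD m0 by simp
    have T0: "T > 0" unfolding T_def using h1 x0 D1 by simp
    have hx0: "hx \<ge> 0" unfolding hx_def using x0 by simp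
    have mt: "D \<le> real m * t" "real m * t \<le> 2 * D" if "t \<in> {N..2*N}" for t
    proof -
      have "real m * N \<le> real m * t" "real m * t \<le> real m * (2 * N)" using that m0 by auto
      thus "D \<le> real m * t" "real m * t \<le> 2 * D" unfolding N_def using m0 by auto
    qed
    have upos: "real m * t + dl > 0" if "t \<in> {N..2*N}" for t using mt[OF that] D1 dl by linarith
    have derivs: "\<forall>j<r. \<forall>t\<in>{N..2*N}. (Fd j has_real_derivative Fd (Suc j) t) (at t)"
      unfolding Fd_def using upos FF_deriv by blast
    have bounds: "\<forall>j\<in>{1..r}. \<forall>t\<in>{N..2*N}. T / N ^ j / A \<le> \<bar>Fd j t\<bar> \<and> \<bar>Fd j t\<bar> \<le> A * T / N ^ j"
    proof (intro ballI)
      fix j t assume j: "j \<in> {1..r}" and t: "t \<in> {N..2*N}"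
      define u where "u = real m * t + dl"
      define Q where "Q = hx * real m ^ j / D ^ (j + 1)"
      have dD: "dl * 1 \<le> dl * D" by (rule mult_left_mono) (use D1 dl in auto)
      have u1: "D \<le> u" "u \<le> (2 + dl) * D" unfolding u_def using mt[OF t] dl D1 dD
        by (auto simp: algebra_simps)
      have u0: "u > 0" using u1 D1 by linarith
      have TQ: "T / N ^ j = Q" unfolding T_def N_def Q_def hx_def using m0 D1
        by (simp add: power_divide field_simps)
      have Q0: "Q \<ge> 0" unfolding Q_def using hx0 D1 by simp
      have absF: "\<bar>Fd j t\<bar> = fact j * (hx * real m ^ j) / u ^ (j + 1)"
        unfolding Fd_def u_def by (rule abs_FF[OF upos[OF t] hx0])
      have num0: "hx * real m ^ j \<ge> 0" using hx0 by simp
      have Du: "D ^ (j+1) \<le> u ^ (j+1)" using u1 D1 by (intro power_mono) auto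
      have uD: "u ^ (j+1) \<le> ((2 + dl) * D) ^ (j+1)" using u1 u0 by (intro power_mono) auto
      have fj: "(fact j :: real) \<le> A"
      proof -
        have "(fact j :: real) \<le> fact r" using j by (intro fact_mono) auto
        also have "\<dots> \<le> fact r * (2 + dl)^(r+1)" using pw1 by simp
        finally show ?thesis unfolding A_def .
      qed
      have pA: "(2 + dl)^(j+1) \<le> A"
      proof -
        have "(2 + dl)^(j+1) \<le> (2 + dl)^(r+1)" using j dl by (intro power_increasing) auto
        also have "\<dots> = 1 * (2 + dl)^(r+1)" by simp
        also have "\<dots> \<le> fact r * (2 + dl)^(r+1)" by (rule mult_right_mono[OF fr1]) (use pw1 in simp)
        finally show ?thesis unfolding A_def .
      qed
      have up: "\<bar>Fd j t\<bar> \<le> A * T / N ^ j"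
      proof -
        have "\<bar>Fd j t\<bar> \<le> fact j * (hx * real m ^ j) / D ^ (j + 1)"
        proof -
          have "(hx * real m ^ j) / u ^ (j + 1) \<le> (hx * real m ^ j) / D ^ (j + 1)"
            using Du D1 num0 u0 by (intro divide_left_mono) auto
          hence "fact j * ((hx * real m ^ j) / u ^ (j + 1)) \<le> fact j * ((hx * real m ^ j) / D ^ (j + 1))"
            by (intro mult_left_mono) auto
          thus ?thesis unfolding absF by simp
        qed
        also have "\<dots> = fact j * Q" unfolding Q_def by simp
        also have "\<dots> \<le> A * Q" using fj Q0 by (intro mult_right_mono) auto
        also have "\<dots> = A * T / N ^ j" using TQ by (simp add: times_divide_eq_right[symmetric])
        finally show ?thesis .
      qed
      have lo: "T / N ^ j / A \<le> \<bar>Fd j t\<bar>"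
      proof -
        have "T / N ^ j / A = Q / A" using TQ by simp
        also have "\<dots> \<le> Q / (2 + dl)^(j+1)"
        proof (rule divide_left_mono[OF pA Q0])
          have "(2 + dl)^(j+1) > 0" using dl by simp
          thus "0 < A * (2 + dl)^(j+1)" using A1 by simp
        qed
        also have "\<dots> = (hx * real m ^ j) / ((2 + dl) * D) ^ (j + 1)" unfolding Q_def
          by (simp add: power_mult_distrib)
        also have "\<dots> \<le> (hx * real m ^ j) / u ^ (j + 1)"
        proof (rule divide_left_mono[OF uD num0])
          have "((2 + dl) * D) ^ (j + 1) > 0" using dl D1 by simp
          moreover have "u ^ (j+1) > 0" using u0 by simp
          ultimately show "0 < ((2 + dl) * D) ^ (j + 1) * u ^ (j + 1)" by simp
        qed
        also have "\<dots> \<le> fact j * (hx * real m ^ j) / u ^ (j + 1)"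
          using num0 u0 by (simp add: divide_right_mono mult_le_cancel_right1)
        finally show ?thesis unfolding absF .
      qed
      show "T / N ^ j / A \<le> \<bar>Fd j t\<bar> \<and> \<bar>Fd j t\<bar> \<le> A * T / N ^ j" using lo up by blast
    qed
    have main: "cmod (\<Sum>n\<in>{n::int. N < of_int n \<and> of_int n \<le> 2*N}. ee (Fd 0 (of_int n)))
            \<le> C * ((T / N) powr ka * N powr la + N / T)"
      using CC N1 T0 derivs bounds by auto
    have setEq: "{n::int. N < of_int n \<and> of_int n \<le> 2*N} = int ` JJ m D"
    proof (intro set_eqI iffI)
      fix n :: int assume "n \<in> {n::int. N < of_int n \<and> of_int n \<le> 2*N}"
      hence n: "N < of_int n" "of_int n \<le> 2*N" by auto
      hence "n > 0" using N1 by linarith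
      hence "n = int (nat n)" by simp
      moreover have "nat n \<in> JJ m D"
        using n \<open>n > 0\<close> m0 unfolding JJ_def N_def by (simp add: field_simps)
      ultimately show "n \<in> int ` JJ m D" by blast
    next
      fix n assume "n \<in> int ` JJ m D"
      then obtain k where "k \<in> JJ m D" "n = int k" by blast
      thus "n \<in> {n::int. N < of_int n \<and> of_int n \<le> 2*N}"
        using m0 unfolding JJ_def N_def by (simp add: field_simps)
    qed
    have Fd0: "Fd 0 (real k) = real h * (x / (real m * real k + dl))" if "k \<in> JJ m D" for k
    proof -
      have "real m * real k > D" using that unfolding JJ_def by simp
      hence pos: "real m * real k + dl > 0" using D1 dl by linarith
      thus ?thesis unfolding Fd_def FF_def hx_def by (simp add: powr_minus_divide)
    qed
    have "(\<Sum>n\<in>{n::int. N < of_int n \<and> of_int n \<le> 2*N}. ee (Fd 0 (of_int n)))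
        = (\<Sum>k\<in>JJ m D. ee (Fd 0 (of_int (int k))))"
      unfolding setEq by (simp add: sum.reindex inj_on_def)
    also have "\<dots> = Sx (JJ m D) (\<lambda>n. x / (real m * real n + dl)) h"
      unfolding Sx_def using Fd0 by (intro sum.cong) auto
    finally have eqS: "(\<Sum>n\<in>{n::int. N < of_int n \<and> of_int n \<le> 2*N}. ee (Fd 0 (of_int n)))
        = Sx (JJ m D) (\<lambda>n. x / (real m * real n + dl)) h" .
    have r1: "(T / N) powr ka = real h powr ka * (x * real m / D^2) powr ka"
    proof -
      have "T / N = real h * (x * real m / D^2)" unfolding T_def N_def using m0 D1
        by (simp add: field_simps power2_eq_square)
      show ?thesis unfolding \<open>T / N = real h * (x * real m / D^2)\<close> by (rule powr_mult)
    qed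
    have r2: "N / T = (D^2 / (x * real m)) / real h" unfolding T_def N_def using m0 D1 x0 h1
      by (simp add: field_simps power2_eq_square)
    show "cmod (Sx (JJ m D) (\<lambda>n. x / (real m * real n + dl)) h)
       \<le> C * (real h powr ka * ((x * real m / D^2) powr ka * (D / real m) powr la) + (D^2 / (x * real m)) / real h)"
      using main unfolding eqS r1 r2 N_def[symmetric] by (simp add: mult_ac)
  qed
qed

lemma JJ_sub: "1 \<le> D \<Longrightarrow> 1 \<le> m \<Longrightarrow> JJ m D \<subseteq> {1..nat \<lfloor>2*D/real m\<rfloor>}"
proof
  fix n assume D: "1 \<le> D" and m: "1 \<le> m" and n: "n \<in> JJ m D"
  have m0: "real m > 0" using m by simp
  have a: "D < real m * real n" "real m * real n \<le> 2*D" using n unfolding JJ_def by auto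
  have "n \<ge> 1" using a D by (cases n) auto
  moreover have "real n \<le> 2*D/real m" using a m0 by (simp add: field_simps)
  hence "int n \<le> \<lfloor>2*D/real m\<rfloor>" by (simp add: le_floor_iff)
  ultimately show "n \<in> {1..nat \<lfloor>2*D/real m\<rfloor>}" by auto
qed

lemma JJ_finite: "1 \<le> D \<Longrightarrow> 1 \<le> m \<Longrightarrow> finite (JJ m D)"
  using JJ_sub finite_subset by blast

lemma JJ_card: "1 \<le> D \<Longrightarrow> 1 \<le> m \<Longrightarrow> real (card (JJ m D)) \<le> 2*D/real m"
proof -
  assume D: "1 \<le> D" and m: "1 \<le> m"
  have "card (JJ m D) \<le> card {1..nat \<lfloor>2*D/real m\<rfloor>}" by (intro card_mono JJ_sub D m) simp
  hence "real (card (JJ m D)) \<le> real (nat \<lfloor>2*D/real m\<rfloor>)" by simp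
  also have "\<dots> \<le> 2*D/real m" using D m by simp
  finally show ?thesis .
qed

lemma ep_ka: "exponent_pair ka la \<Longrightarrow> 0 \<le> ka \<and> ka \<le> 1/2 \<and> 1/2 \<le> la \<and> la \<le> 1"
  unfolding exponent_pair_def by blast

lemma Im_bound:
  fixes ka la dl :: real
  assumes ep: "exponent_pair ka la" and dl: "dl \<ge> 0"
  shows "\<exists>C>0. \<forall>m x D (H::nat). 1 \<le> D \<longrightarrow> 1 \<le> m \<longrightarrow> real m \<le> D \<longrightarrow> 0 < x \<longrightarrow> 1 \<le> H \<longrightarrow>
     \<bar>\<Sum>n\<in>JJ m D. psi (x / (real m * real n + dl))\<bar>
       \<le> D / (2 * real m * real H) + C * ((x * real m / D^2) powr ka * (D / real m) powr la) * KK ka H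
          + 3 * C * (D^2 / (x * real m))"
proof -
  obtain C where C: "C > 0" and CC: "\<forall>m x D h. 1 \<le> D \<longrightarrow> 1 \<le> m \<longrightarrow> real m \<le> D \<longrightarrow> 0 < x \<longrightarrow> 1 \<le> h \<longrightarrow>
     cmod (Sx (JJ m D) (\<lambda>n. x / (real m * real n + dl)) h)
       \<le> C * (real h powr ka * ((x * real m / D^2) powr ka * (D / real m) powr la) + (D^2 / (x * real m)) / real h)"
    using expsum_bound[OF ep dl] by blast
  have ka: "0 \<le> ka" "ka \<le> 1/2" using ep_ka[OF ep] by auto
  show ?thesis
  proof (intro exI[of _ C] conjI allI impI)
    show "C > 0" by (rule C)
    fix m :: nat and x D :: real and H :: nat
    assume D1: "1 \<le> D" and m1: "1 \<le> m" and mD: "real m \<le> D" and x0: "0 < x" and H1: "1 \<le> H"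
    define y where "y n = x / (real m * real n + dl)" for n
    define X where "X = (x * real m / D^2) powr ka * (D / real m) powr la"
    define Y where "Y = D^2 / (x * real m)"
    define de where "de = 1 / (2 * real H)"
    have de: "0 < de" "de < 1" unfolding de_def using H1 by auto
    have fin: "finite (JJ m D)" by (rule JJ_finite[OF D1 m1])
    have X0: "X \<ge> 0" unfolding X_def by simp
    have Y0: "Y \<ge> 0" unfolding Y_def using x0 by simp
    have "\<bar>\<Sum>n\<in>JJ m D. psi (y n)\<bar> \<le> card (JJ m D) * de / 2 + (\<Sum>n. cw de (Suc n) * cmod (Sx (JJ m D) y (Suc n)))"
      by (rule psi_sum_bound[OF fin de])
    also have "card (JJ m D) * de / 2 \<le> D / (2 * real m * real H)"
    proof -
      have "card (JJ m D) * de / 2 \<le> (2*D/real m) * de / 2"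
        using JJ_card[OF D1 m1] de by (intro divide_right_mono mult_right_mono) auto
      also have "\<dots> = D / (2 * real m * real H)" unfolding de_def by (simp add: field_simps)
      finally show ?thesis .
    qed
    also have "(\<Sum>n. cw de (Suc n) * cmod (Sx (JJ m D) y (Suc n))) \<le> C * X * KK ka H + 3 * C * Y"
      unfolding de_def
    proof (rule weighted_bound[OF H1 ka _ X0 Y0])
      show "0 \<le> C" using C by simp
      fix k :: nat assume "1 \<le> k"
      thus "cmod (Sx (JJ m D) y k) \<le> C * (real k powr ka * X + Y / real k)"
        using CC D1 m1 mD x0 unfolding X_def Y_def y_def by blast
    next
      show "summable (\<lambda>n. cw (1 / (2 * real H)) (Suc n) * cmod (Sx (JJ m D) y (Suc n)))"
        using summable_cw[OF de(1)] unfolding de_def .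
    qed
    finally show "\<bar>\<Sum>n\<in>JJ m D. psi (x / (real m * real n + dl))\<bar>
       \<le> D / (2 * real m * real H) + C * ((x * real m / D^2) powr ka * (D / real m) powr la) * KK ka H
          + 3 * C * (D^2 / (x * real m))"
      unfolding X_def Y_def y_def by simp
  qed
qed

lemma opt_powr_identities:
  fixes P X ka :: real
  assumes P: "P > 0" and X: "X > 0" and ka: "ka \<ge> 0"
  defines "q \<equiv> 1 / (1 + ka)"
  defines "Z \<equiv> (P / X) powr q"
  shows "P / Z = (P powr ka * X) powr q" "X * Z powr ka = (P powr ka * X) powr q"
proof -
  have q: "q > 0" unfolding q_def using ka by simp
  have e1: "1 - q = ka * q" unfolding q_def using ka by (simp add: field_simps)
  have W: "(P powr ka * X) powr q = P powr (ka * q) * X powr q"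
    using P X by (simp add: powr_mult powr_powr)
  have Zq: "Z = P powr q / X powr q" unfolding Z_def using P X by (simp add: powr_divide)
  have "P / Z = P powr 1 * X powr q / P powr q" unfolding Zq using P X by simp
  also have "\<dots> = P powr (1 - q) * X powr q" by (simp add: powr_diff)
  also have "\<dots> = (P powr ka * X) powr q" unfolding W e1 ..
  finally show "P / Z = (P powr ka * X) powr q" .
  have "Z powr ka = P powr (q * ka) / X powr (q * ka)" unfolding Zq using P X
    by (simp add: powr_divide powr_powr)
  hence "X * Z powr ka = X powr 1 * P powr (q * ka) / X powr (q * ka)" using X by simp
  also have "\<dots> = X powr (1 - q * ka) * P powr (q * ka)" by (simp add: powr_diff)
  also have "1 - q * ka = q" using e1 by (simp add: mult.commute)
  also have "X powr q * P powr (q * ka) = (P powr ka * X) powr q" unfolding W by (simp add: mult_ac)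
  finally show "X * Z powr ka = (P powr ka * X) powr q" .
qed

lemma opt_H:
  fixes P X ka E :: real
  assumes P: "P > 0" and X: "X > 0" and ka: "0 \<le> ka" "ka \<le> 1" and E: "E \<ge> 0"
  shows "\<exists>H::nat. H \<ge> 1 \<and> P / (2 * real H) + E * X * real H powr ka
           \<le> (1 + 2 * E) * ((P powr ka * X) powr (1 / (1 + ka)) + X)"
proof -
  define q where "q = 1 / (1 + ka)"
  define Z where "Z = (P / X) powr q"
  define W where "W = (P powr ka * X) powr q"
  have ids: "P / Z = W" "X * Z powr ka = W"
    using opt_powr_identities[OF P X ka(1)] unfolding W_def Z_def q_def by auto
  have W0: "W \<ge> 0" unfolding W_def by simp
  define Hs where "Hs = max 1 Z"
  define H where "H = nat \<lceil>Hs\<rceil>"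
  have Hs1: "Hs \<ge> 1" unfolding Hs_def by simp
  have HHs: "real H \<ge> Hs" unfolding H_def using Hs1 by linarith
  have HHs2: "real H \<le> 2 * Hs" unfolding H_def using Hs1 by linarith
  have H1: "H \<ge> 1" using HHs Hs1 by linarith
  have t1: "P / (2 * real H) \<le> P / Hs"
    using HHs Hs1 P by (intro divide_left_mono) auto
  have "real H powr ka \<le> (2 * Hs) powr ka" using HHs2 H1 ka by (intro powr_mono2) auto
  also have "\<dots> = 2 powr ka * Hs powr ka" using Hs1 by (simp add: powr_mult)
  also have "\<dots> \<le> 2 * Hs powr ka"
  proof (intro mult_right_mono)
    show "2 powr ka \<le> 2" using ka powr_mono[of ka 1 2] by simp
  qed simp
  finally have t2: "E * X * real H powr ka \<le> 2 * E * (X * Hs powr ka)"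
    using E X by (simp add: mult_left_mono mult.assoc mult.left_commute)
  have main: "P / Hs + 2 * E * (X * Hs powr ka) \<le> (1 + 2 * E) * (W + X)"
  proof (cases "Z \<ge> 1")
    case True
    hence "Hs = Z" unfolding Hs_def by simp
    hence "P / Hs + 2 * E * (X * Hs powr ka) = (1 + 2 * E) * W" using ids by (simp add: algebra_simps)
    also have "\<dots> \<le> (1 + 2 * E) * (W + X)" using E X by (intro mult_left_mono) auto
    finally show ?thesis .
  next
    case False
    hence Hs: "Hs = 1" unfolding Hs_def by simp
    have "P / X < 1"
    proof (rule ccontr)
      assume "\<not> P / X < 1"
      hence "P / X \<ge> 1" by simp
      hence "(P / X) powr q \<ge> 1" unfolding q_def using ka by (intro ge_one_powr_ge_zero) auto
      thus False using False unfolding Z_def by simp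
    qed
    hence "P \<le> X" using X by (simp add: field_simps)
    hence "P / Hs + 2 * E * (X * Hs powr ka) \<le> X + 2 * E * X" unfolding Hs by simp
    also have "\<dots> \<le> (1 + 2 * E) * (W + X)" using E W0 by (simp add: algebra_simps)
    finally show ?thesis .
  qed
  show ?thesis
    by (intro exI[of _ H] conjI H1) (use t1 t2 main in \<open>unfold W_def q_def, linarith\<close>)
qed

lemma sq_powr: "(D::real) > 0 \<Longrightarrow> (D^2) powr a = D powr (2 * a)"
proof -
  assume D: "D > 0"
  have "D^2 = D powr 2" using D by (simp add: powr_numeral)
  thus ?thesis by (simp add: powr_powr)
qed

lemma Xm_eq:
  fixes x m D ka la :: real
  assumes "x > 0" "m > 0" "D > 0"
  shows "(x * m / D^2) powr ka * (D / m) powr la = x powr ka * D powr (la - 2*ka) * m powr (ka - la)"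
proof -
  have "(x * m / D^2) powr ka * (D / m) powr la = x powr ka * m powr ka / D powr (2*ka) * (D powr la / m powr la)"
    using assms by (simp add: powr_mult powr_divide sq_powr)
  also have "\<dots> = x powr ka * (D powr la / D powr (2*ka)) * (m powr ka / m powr la)" by (simp add: field_simps)
  also have "\<dots> = x powr ka * D powr (la - 2*ka) * m powr (ka - la)" by (simp add: powr_diff)
  finally show ?thesis .
qed

lemma Wm_eq:
  fixes x m D ka la :: real
  assumes "x > 0" "m > 0" "D > 0"
  shows "(D / m) powr ka * (x powr ka * D powr (la - 2*ka) * m powr (ka - la)) = x powr ka * D powr (la - ka) * m powr (- la)"
proof -
  have "(D / m) powr ka * (x powr ka * D powr (la - 2*ka) * m powr (ka - la))
      = x powr ka * (D powr ka * D powr (la - 2*ka)) * (m powr (ka - la) / m powr ka)"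
    using assms by (simp add: powr_divide field_simps)
  also have "\<dots> = x powr ka * D powr (la - ka) * m powr (- la)"
    by (simp add: powr_add[symmetric] powr_diff[symmetric])
  finally show ?thesis .
qed

definition Phi :: "real \<Rightarrow> real \<Rightarrow> real \<Rightarrow> real \<Rightarrow> nat \<Rightarrow> real" where
  "Phi ka la x D m' = (let m = real m' in
     (x powr ka * D powr (la - ka) * m powr (- la)) powr (1 / (1 + ka))
     + x powr ka * D powr (la - 2*ka) * m powr (ka - la) * (if ka = 0 then 1 + ln D else 1)
     + D^2 / (x * m) + 1 / m)"

lemma Im_bound_opt:
  fixes ka la dl :: real
  assumes ep: "exponent_pair ka la" and dl: "dl \<ge> 0"
  shows "\<exists>K>0. \<forall>m x D. 1 \<le> D \<longrightarrow> 1 \<le> m \<longrightarrow> real m \<le> D \<longrightarrow> D \<le> x \<longrightarrow>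
     \<bar>\<Sum>n\<in>JJ m D. psi (x / (real m * real n + dl))\<bar> \<le> K * Phi ka la x D m"
proof -
  obtain C where C: "C > 0" and CC: "\<forall>m x D (H::nat). 1 \<le> D \<longrightarrow> 1 \<le> m \<longrightarrow> real m \<le> D \<longrightarrow> 0 < x \<longrightarrow> 1 \<le> H \<longrightarrow>
     \<bar>\<Sum>n\<in>JJ m D. psi (x / (real m * real n + dl))\<bar>
       \<le> D / (2 * real m * real H) + C * ((x * real m / D^2) powr ka * (D / real m) powr la) * KK ka H
          + 3 * C * (D^2 / (x * real m))"
    using Im_bound[OF ep dl] by blast
  have ka: "0 \<le> ka" "ka \<le> 1/2" using ep_ka[OF ep] by auto
  define E where "E = C * (1 / ka + 2)"
  define K where "K = 1 + 2 * E + 7 * C"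
  have E0: "E \<ge> 0" unfolding E_def using C ka by simp
  have K0: "K > 0" unfolding K_def using E0 C by simp
  show ?thesis
  proof (intro exI[of _ K] conjI allI impI K0)
    fix m :: nat and x D :: real
    assume D1: "1 \<le> D" and m1: "1 \<le> m" and mD: "real m \<le> D" and xD: "D \<le> x"
    have x0: "x > 0" using D1 xD by simp
    have m0: "real m > 0" using m1 by simp
    define X where "X = (x * real m / D^2) powr ka * (D / real m) powr la"
    define Y where "Y = D^2 / (x * real m)"
    define Xm where "Xm = x powr ka * D powr (la - 2*ka) * real m powr (ka - la)"
    define Wm where "Wm = (x powr ka * D powr (la - ka) * real m powr (- la)) powr (1 / (1 + ka))"
    have XX: "X = Xm" unfolding X_def Xm_def using x0 m0 D1 by (intro Xm_eq) auto
    have Xpos: "X > 0" unfolding X_def using x0 m0 D1 by simp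
    have Y0: "Y \<ge> 0" unfolding Y_def using x0 m0 by simp
    have W0: "Wm \<ge> 0" unfolding Wm_def by simp
    have im0: "1 / real m \<ge> 0" by simp
    have PhiEq: "Phi ka la x D m = Wm + Xm * (if ka = 0 then 1 + ln D else 1) + Y + 1 / real m"
      unfolding Phi_def Wm_def Xm_def Y_def Let_def by simp
    show "\<bar>\<Sum>n\<in>JJ m D. psi (x / (real m * real n + dl))\<bar> \<le> K * Phi ka la x D m"
    proof (cases "ka = 0")
      case False
      hence kap: "ka > 0" using ka by simp
      obtain H :: nat where H1: "H \<ge> 1" and HH: "(D / real m) / (2 * real H) + E * X * real H powr ka
           \<le> (1 + 2 * E) * (((D / real m) powr ka * X) powr (1 / (1 + ka)) + X)"
        using opt_H[of "D / real m" X ka E] m0 D1 Xpos ka E0 by auto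
      have WW: "((D / real m) powr ka * X) powr (1 / (1 + ka)) = Wm"
        unfolding Wm_def XX Xm_def using x0 m0 D1 by (subst Wm_eq) auto
      have KKe: "C * X * KK ka H = E * X * real H powr ka"
        unfolding KK_def E_def using kap by (simp add: field_simps)
      have "\<bar>\<Sum>n\<in>JJ m D. psi (x / (real m * real n + dl))\<bar>
          \<le> D / (2 * real m * real H) + C * X * KK ka H + 3 * C * Y"
        using CC D1 m1 mD x0 H1 unfolding X_def Y_def by (simp add: mult.assoc)
      also have "D / (2 * real m * real H) = (D / real m) / (2 * real H)" by simp
      also have "(D / real m) / (2 * real H) + C * X * KK ka H \<le> (1 + 2 * E) * (Wm + Xm)"
      proof -
        have "(D / real m) / (2 * real H) + C * X * KK ka H = (D / real m) / (2 * real H) + E * X * real H powr ka"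
          using KKe by simp
        also have "\<dots> \<le> (1 + 2 * E) * (((D / real m) powr ka * X) powr (1 / (1 + ka)) + X)" by (rule HH)
        also have "\<dots> = (1 + 2 * E) * (Wm + Xm)" using WW XX by simp
        finally show ?thesis .
      qed
      also have "(1 + 2 * E) * (Wm + Xm) + 3 * C * Y \<le> K * Phi ka la x D m"
      proof -
        have a: "(1 + 2 * E) * Wm \<le> K * Wm" using W0 C unfolding K_def by (intro mult_right_mono) auto
        have b: "(1 + 2 * E) * Xm \<le> K * Xm" using Xpos XX C unfolding K_def by (intro mult_right_mono) auto
        have c: "(3 * C) * Y \<le> K * Y" using Y0 C E0 unfolding K_def by (intro mult_right_mono) auto
        have d: "0 \<le> K * (1 / real m)" using K0 im0 by simp
        have "(1 + 2 * E) * (Wm + Xm) + 3 * C * Y \<le> K * Wm + K * Xm + K * Y + K * (1 / real m)"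
          using a b c d by (simp add: distrib_left)
        thus ?thesis unfolding PhiEq using False by (simp add: algebra_simps)
      qed
      finally show ?thesis by simp
    next
      case True
      define H where "H = nat \<lceil>D\<rceil>"
      have HD: "real H \<ge> D" "real H \<le> 2 * D" unfolding H_def using D1 by linarith+
      have H1: "H \<ge> 1" using HD D1 by linarith
      have lnH: "ln (real H) \<le> 1 + ln D"
      proof -
        have "ln (real H) \<le> ln (2 * D)" using HD H1 by simp
        also have "\<dots> = ln 2 + ln D" using D1 by (simp add: ln_mult)
        also have "ln 2 \<le> (1::real)" using ln_2_less_1 by simp
        finally show ?thesis by simp
      qed
      have lnD: "ln D \<ge> 0" using D1 by simp
      have "\<bar>\<Sum>n\<in>JJ m D. psi (x / (real m * real n + dl))\<bar>
          \<le> D / (2 * real m * real H) + C * X * KK ka H + 3 * C * Y"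
        using CC D1 m1 mD x0 H1 unfolding X_def Y_def by (simp add: mult.assoc)
      also have "D / (2 * real m * real H) \<le> 1 / real m"
      proof -
        have "D / (2 * real m * real H) \<le> D / (2 * real m * D)"
          using HD D1 m0 by (intro divide_left_mono mult_left_mono) auto
        also have "\<dots> \<le> 1 / real m" using D1 m0 by (simp add: field_simps)
        finally show ?thesis .
      qed
      also have "C * X * KK ka H \<le> 4 * C * (Xm * (1 + ln D))"
      proof -
        have "KK ka H = 3 + ln (real H)" unfolding KK_def using True by simp
        also have "\<dots> \<le> 4 * (1 + ln D)" using lnH lnD by simp
        finally have "C * X * KK ka H \<le> C * X * (4 * (1 + ln D))"
          using C Xpos by (intro mult_left_mono) auto
        thus ?thesis unfolding XX by (simp add: mult_ac)
      qed
      also have "1 / real m + 4 * C * (Xm * (1 + ln D)) + 3 * C * Y \<le> K * Phi ka la x D m"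
      proof -
        have a: "0 \<le> K * Wm" using W0 K0 by simp
        have b: "(4 * C) * (Xm * (1 + ln D)) \<le> K * (Xm * (1 + ln D))" using Xpos XX C E0 lnD unfolding K_def
          by (intro mult_right_mono) auto
        have c: "(3 * C) * Y \<le> K * Y" using Y0 C E0 unfolding K_def by (intro mult_right_mono) auto
        have d: "1 * (1 / real m) \<le> K * (1 / real m)" using im0 C E0 unfolding K_def by (intro mult_right_mono) auto
        have "1 / real m + 4 * C * (Xm * (1 + ln D)) + 3 * C * Y \<le> K * Wm + K * (Xm * (1 + ln D)) + K * Y + K * (1 / real m)"
          using a b c d by simp
        thus ?thesis unfolding PhiEq using True by (simp add: algebra_simps)
      qed
      finally show ?thesis by simp
    qed
  qed
qed

lemma id_conv_div:
  assumes "d > 0"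
  shows "id_conv g d / of_nat d = (\<Sum>e\<in>{e. e dvd d}. g (d div e) / of_nat (d div e))"
proof -
  have "id_conv g d / of_nat d = (\<Sum>e\<in>{e. e dvd d}. of_nat e * g (d div e) / of_nat d)"
    unfolding id_conv_def by (simp add: sum_divide_distrib)
  also have "\<dots> = (\<Sum>e\<in>{e. e dvd d}. g (d div e) / of_nat (d div e))"
  proof (intro sum.cong refl)
    fix e assume "e \<in> {e. e dvd d}"
    then obtain k where k: "d = e * k" by auto
    have "e > 0" "k > 0" using assms k by auto
    thus "of_nat e * g (d div e) / of_nat d = g (d div e) / (of_nat (d div e) :: complex)"
      using k by (simp add: field_simps)
  qed
  finally show ?thesis .
qed

lemma frakS_reindex:
  assumes D: "D \<ge> 1"
  shows "frakS dl (id_conv g) x D = (\<Sum>m\<in>{1..nat \<lfloor>2*D\<rfloor>}. g m / of_nat m *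
           of_real (\<Sum>n\<in>JJ m D. psi (x / (real m * real n + dl))))"
proof -
  define Ds where "Ds = {d::nat. D < real d \<and> real d \<le> 2 * D}"
  define M where "M = nat \<lfloor>2*D\<rfloor>"
  define F where "F p = g (fst p div snd p) / of_nat (fst p div snd p) * of_real (psi (x / (real (fst p) + dl)))" for p :: "nat \<times> nat"
  have Dsub: "Ds \<subseteq> {..M}" unfolding Ds_def M_def by (auto simp: le_nat_floor le_floor_iff)
  have finDs: "finite Ds" using Dsub finite_subset by blast
  have Dpos: "d > 0" if "d \<in> Ds" for d using that D unfolding Ds_def by (cases d) auto
  have fin2: "finite {e. e dvd d}" if "d \<in> Ds" for d using Dpos[OF that] by simp
  have "frakS dl (id_conv g) x D = (\<Sum>d\<in>Ds. \<Sum>e\<in>{e. e dvd d}. F (d, e))"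
    unfolding frakS_def Ds_def[symmetric] F_def
    by (intro sum.cong refl) (simp add: id_conv_div[OF Dpos] sum_distrib_right)
  also have "\<dots> = (\<Sum>p\<in>Sigma Ds (\<lambda>d. {e. e dvd d}). F p)"
    using sum.Sigma[OF finDs, of "\<lambda>d. {e. e dvd d}" "\<lambda>d e. F (d, e)"] fin2 by (simp add: case_prod_beta')
  also have "\<dots> = (\<Sum>q\<in>Sigma {1..M} (\<lambda>m. JJ m D). F (fst q * snd q, snd q))"
  proof (rule sum.reindex_bij_betw[symmetric, where h = "\<lambda>q. (fst q * snd q, snd q)"])
    show "bij_betw (\<lambda>q. (fst q * snd q, snd q)) (Sigma {1..M} (\<lambda>m. JJ m D)) (Sigma Ds (\<lambda>d. {e. e dvd d}))"
    proof (rule bij_betwI')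
      fix p q assume p: "p \<in> Sigma {1..M} (\<lambda>m. JJ m D)" and q: "q \<in> Sigma {1..M} (\<lambda>m. JJ m D)"
      have "snd p > 0" using p D unfolding JJ_def by (cases "snd p") auto
      thus "((fst p * snd p, snd p) = (fst q * snd q, snd q)) = (p = q)"
        by (cases p, cases q) auto
    next
      fix p assume p: "p \<in> Sigma {1..M} (\<lambda>m. JJ m D)"
      thus "(fst p * snd p, snd p) \<in> Sigma Ds (\<lambda>d. {e. e dvd d})"
        unfolding Ds_def JJ_def by (cases p) auto
    next
      fix r assume r: "r \<in> Sigma Ds (\<lambda>d. {e. e dvd d})"
      obtain d e where de: "r = (d, e)" "d \<in> Ds" "e dvd d" using r by auto
      obtain k where k: "d = e * k" using de by auto
      have d0: "d > 0" using Dpos[OF de(2)] .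
      have "k \<ge> 1" "e \<ge> 1" using d0 k by (cases k; auto)+
      moreover have "k \<le> M"
      proof -
        have "k \<le> d" using k \<open>e \<ge> 1\<close> by simp
        thus ?thesis using Dsub de(2) by auto
      qed
      moreover have "e \<in> JJ k D" using de(2) k unfolding Ds_def JJ_def by (simp add: mult.commute)
      ultimately have "(k, e) \<in> Sigma {1..M} (\<lambda>m. JJ m D)" by auto
      moreover have "r = (fst (k, e) * snd (k, e), snd (k, e))" using de k by (simp add: mult.commute)
      ultimately show "\<exists>q \<in> Sigma {1..M} (\<lambda>m. JJ m D). r = (fst q * snd q, snd q)" by blast
    qed
  qed
  also have "\<dots> = (\<Sum>m\<in>{1..M}. \<Sum>n\<in>JJ m D. F (m * n, n))"
    using sum.Sigma[of "{1..M}" "\<lambda>m. JJ m D" "\<lambda>m n. F (m * n, n)"] JJ_finite D by (simp add: case_prod_beta')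
  also have "\<dots> = (\<Sum>m\<in>{1..M}. g m / of_nat m * of_real (\<Sum>n\<in>JJ m D. psi (x / (real m * real n + dl))))"
  proof (intro sum.cong refl)
    fix m assume m: "m \<in> {1..M}"
    have "(\<Sum>n\<in>JJ m D. F (m * n, n)) = (\<Sum>n\<in>JJ m D. g m / of_nat m * of_real (psi (x / (real m * real n + dl))))"
    proof (intro sum.cong refl)
      fix n assume "n \<in> JJ m D"
      hence "n > 0" using D unfolding JJ_def by (cases n) auto
      thus "F (m * n, n) = g m / of_nat m * of_real (psi (x / (real m * real n + dl)))"
        unfolding F_def by simp
    qed
    also have "\<dots> = g m / of_nat m * of_real (\<Sum>n\<in>JJ m D. psi (x / (real m * real n + dl)))"
      by (simp add: sum_distrib_left)
    finally show "(\<Sum>n\<in>JJ m D. F (m * n, n)) = g m / of_nat m * of_real (\<Sum>n\<in>JJ m D. psi (x / (real m * real n + dl)))" .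
  qed
  finally show ?thesis unfolding M_def .
qed

lemma pow_sum_bound:
  fixes s :: real
  assumes "0 < s"
  shows "(\<Sum>m\<in>{1..M}. real m powr (-1 - s)) \<le> 1 + 1 / s"
proof -
  define f where "f n = real (Suc n) powr (-1 - s)" for n
  have tl: "summable (\<lambda>n. real (n + 1 + 1) powr ((1 - s) - 2))"
    "(\<Sum>n. real (n + 1 + 1) powr ((1 - s) - 2)) \<le> real (1::nat) powr ((1 - s) - 1) / (1 - (1 - s))"
    using tail_sum[of "1 - s" 1] assms by auto
  have e: "(\<lambda>n. f (Suc n)) = (\<lambda>n. real (n + 1 + 1) powr ((1 - s) - 2))"
    unfolding f_def by (simp add: fun_eq_iff algebra_simps)
  have sm1: "summable (\<lambda>n. f (Suc n))" unfolding e by (rule tl(1))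
  hence sm: "summable f" by (simp add: summable_Suc_iff)
  have "(\<Sum>m\<in>{1..M}. real m powr (-1 - s)) = (\<Sum>n<M. f n)"
    unfolding f_def using sum.atLeast1_atMost_eq[of "\<lambda>m. real m powr (-1 - s)" M] by simp
  also have "\<dots> \<le> suminf f" by (rule sum_le_suminf[OF sm]) (auto simp: f_def)
  also have "\<dots> = (\<Sum>n. f (Suc n)) + f 0" using suminf_split_head[OF sm] by simp
  also have "(\<Sum>n. f (Suc n)) \<le> 1 / s" unfolding e using tl(2) by simp
  also have "f 0 = 1" unfolding f_def by simp
  finally show ?thesis by simp
qed

lemma harm_sum_bound:
  assumes "M \<ge> 1"
  shows "(\<Sum>m\<in>{1..M}. 1 / real m) \<le> 1 + ln (real M)"
proof -
  have "(\<Sum>m\<in>{1..M}. 1 / real m) = (\<Sum>n<M. 1 / real (Suc n))"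
    using sum.atLeast1_atMost_eq[of "\<lambda>m. 1 / real m" M] by simp
  also have "\<dots> \<le> 1 + ln (real M)" by (rule head_sum_zero[OF assms])
  finally show ?thesis .
qed

lemma psi_abs: "\<bar>psi t\<bar> \<le> 1/2"
  unfolding psi_def abs_le_iff using frac_lt_1[of t] frac_ge_0[of t] by linarith

lemma I_small:
  assumes "1 \<le> D" "D < real m"
  shows "\<bar>\<Sum>n\<in>JJ m D. psi (x / (real m * real n + dl))\<bar> \<le> 1/2"
proof -
  have sub: "JJ m D \<subseteq> {1}"
  proof
    fix n assume n: "n \<in> JJ m D"
    hence a: "D < real m * real n" "real m * real n \<le> 2 * D" unfolding JJ_def by auto
    have "n \<noteq> 0"
    proof
      assume "n = 0"
      thus False using a assms by simp
    qed
    moreover have "n < 2"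
    proof (rule ccontr)
      assume "\<not> n < 2"
      hence "real n \<ge> 2" by simp
      hence "real m * real n \<ge> real m * 2" using assms by (intro mult_left_mono) auto
      thus False using a assms by linarith
    qed
    ultimately show "n \<in> {1}" by auto
  qed
  have "\<bar>\<Sum>n\<in>JJ m D. psi (x / (real m * real n + dl))\<bar> \<le> (\<Sum>n\<in>JJ m D. \<bar>psi (x / (real m * real n + dl))\<bar>)"
    by (rule sum_abs)
  also have "\<dots> \<le> (\<Sum>n\<in>{1::nat}. \<bar>psi (x / (real m * real n + dl))\<bar>)"
    by (rule sum_mono2[OF _ sub]) auto
  also have "\<dots> \<le> 1/2" using psi_abs by simp
  finally show ?thesis .
qed

lemma W_half:
  fixes x D ka la :: real
  assumes D: "1 \<le> D" "D \<le> x" and m: "1 \<le> m" "real m \<le> 2 * D"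
    and ka: "0 \<le> ka" "ka \<le> 1/2" and la: "1/2 \<le> la" "la \<le> 1"
  shows "(x powr ka * D powr (la - ka) * real m powr (- la)) powr (1 / (1 + ka)) \<ge> 1/2"
proof -
  define b where "b = x powr ka * D powr (la - ka) * real m powr (- la)"
  have m0: "real m > 0" using m by simp
  have "x powr ka \<ge> D powr ka" using D ka by (intro powr_mono2) auto
  moreover have "real m powr (- la) \<ge> (2 * D) powr (- la)" using m la by (intro powr_mono2') auto
  ultimately have "b \<ge> D powr ka * D powr (la - ka) * (2 * D) powr (- la)"
    unfolding b_def using D by (intro mult_mono) auto
  also have "D powr ka * D powr (la - ka) * (2 * D) powr (- la) = 2 powr (- la)"
    using D by (simp add: powr_add[symmetric] powr_mult powr_minus field_simps)
  also have "2 powr (- la) \<ge> 2 powr (-1)" using la by (intro powr_mono) auto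
  finally have b2: "b \<ge> 1/2" by (simp add: powr_minus)
  have "b powr (1 / (1 + ka)) \<ge> 1/2"
  proof (cases "b \<ge> 1")
    case True
    have "b powr (1 / (1 + ka)) \<ge> 1" using True ka by (intro ge_one_powr_ge_zero) auto
    thus ?thesis by simp
  next
    case False
    have "b powr 1 \<le> b powr (1 / (1 + ka))" using False b2 ka by (intro powr_mono') auto
    thus ?thesis using b2 by simp
  qed
  thus ?thesis unfolding b_def .
qed

lemma Phi_nonneg_W:
  assumes "1 \<le> D" "0 < x" "1 \<le> m"
  shows "Phi ka la x D m \<ge> (x powr ka * D powr (la - ka) * real m powr (- la)) powr (1 / (1 + ka))"
proof -
  have "x powr ka * D powr (la - 2*ka) * real m powr (ka - la) * (if ka = 0 then 1 + ln D else 1) \<ge> 0"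
    using assms by simp
  moreover have "D^2 / (x * real m) \<ge> 0" using assms by simp
  moreover have "1 / real m \<ge> 0" by simp
  ultimately show ?thesis unfolding Phi_def Let_def by linarith
qed

lemma Im_bound_all:
  fixes ka la dl :: real
  assumes ep: "exponent_pair ka la" and dl: "dl \<ge> 0"
  shows "\<exists>K>0. \<forall>m x D. 1 \<le> D \<longrightarrow> 1 \<le> m \<longrightarrow> real m \<le> 2 * D \<longrightarrow> D \<le> x \<longrightarrow>
     \<bar>\<Sum>n\<in>JJ m D. psi (x / (real m * real n + dl))\<bar> \<le> K * Phi ka la x D m"
proof -
  obtain K1 where K1: "K1 > 0" and KK1: "\<forall>m x D. 1 \<le> D \<longrightarrow> 1 \<le> m \<longrightarrow> real m \<le> D \<longrightarrow> D \<le> x \<longrightarrow>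
     \<bar>\<Sum>n\<in>JJ m D. psi (x / (real m * real n + dl))\<bar> \<le> K1 * Phi ka la x D m"
    using Im_bound_opt[OF ep dl] by blast
  have kl: "0 \<le> ka" "ka \<le> 1/2" "1/2 \<le> la" "la \<le> 1" using ep_ka[OF ep] by auto
  show ?thesis
  proof (intro exI[of _ "K1 + 1"] conjI allI impI)
    show "K1 + 1 > 0" using K1 by simp
    fix m x D assume D1: "1 \<le> D" and m1: "1 \<le> m" and m2: "real m \<le> 2 * D" and xD: "D \<le> x"
    have x0: "x > 0" using D1 xD by simp
    have Ph: "Phi ka la x D m \<ge> 1/2"
      using Phi_nonneg_W[OF D1 x0 m1, where ka=ka and la=la] W_half[OF D1 xD m1 m2 kl] by linarith
    show "\<bar>\<Sum>n\<in>JJ m D. psi (x / (real m * real n + dl))\<bar> \<le> (K1 + 1) * Phi ka la x D m"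
    proof (cases "real m \<le> D")
      case True
      hence "\<bar>\<Sum>n\<in>JJ m D. psi (x / (real m * real n + dl))\<bar> \<le> K1 * Phi ka la x D m"
        using KK1 D1 m1 xD by blast
      also have "\<dots> \<le> (K1 + 1) * Phi ka la x D m" using Ph by (simp add: algebra_simps)
      finally show ?thesis .
    next
      case False
      hence "\<bar>\<Sum>n\<in>JJ m D. psi (x / (real m * real n + dl))\<bar> \<le> 1/2" using I_small D1 by simp
      also have "\<dots> \<le> Phi ka la x D m" by (rule Ph)
      also have "\<dots> \<le> (K1 + 1) * Phi ka la x D m" using Ph K1 by (simp add: algebra_simps)
      finally show ?thesis .
    qed
  qed
qed

lemma Phi_sum:
  fixes x D ka la :: real
  assumes D1: "1 \<le> D" and xD: "D \<le> x" and ka: "0 \<le> ka" "ka \<le> 1/2" and la: "1/2 \<le> la" "la \<le> 1"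
  shows "(\<Sum>m\<in>{1..nat \<lfloor>2*D\<rfloor>}. Phi ka la x D m / real m)
     \<le> 4 * (x powr ka * D powr (la - ka)) powr (1/(1+ka)) + 3 * (x powr ka * D powr (la - 2*ka)) * (2 + ln D)
        + 2 * (D^2/x) + 2"
proof -
  define M where "M = nat \<lfloor>2*D\<rfloor>"
  define q where "q = 1/(1+ka)"
  define W where "W = (x powr ka * D powr (la - ka)) powr q"
  define V where "V = x powr ka * D powr (la - 2*ka)"
  define L where "L = (if ka = 0 then 1 + ln D else 1)"
  have x0: "x > 0" using D1 xD by simp
  have M1: "M \<ge> 1" unfolding M_def using D1 by linarith
  have M2: "real M \<le> 2 * D" unfolding M_def using D1 by linarith
  have W0: "W \<ge> 0" "V \<ge> 0" unfolding W_def V_def by simp_all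
  have L0: "L \<ge> 0" unfolding L_def using D1 by simp
  have q0: "q > 0" unfolding q_def using ka by simp
  have lq: "la * q \<ge> 1/3"
  proof -
    have "la * q = la / (1 + ka)" unfolding q_def by simp
    also have "\<dots> \<ge> (1/2) / (3/2)" using la ka by (intro frac_le) auto
    finally show ?thesis by simp
  qed
  have eq: "Phi ka la x D m / real m = W * real m powr (-1 - la * q) + V * (L * real m powr (ka - la - 1))
       + (D^2/x) * real m powr (-1 - 1) + real m powr (-1 - 1)" if m: "m \<in> {1..M}" for m
  proof -
    have m0: "real m > 0" using m by simp
    have mm: "real m powr (-1 - 1) = 1 / (real m * real m)"
      using m0 by (simp add: powr_minus_divide[of _ 2, simplified] powr_numeral power2_eq_square)
    have t1: "(x powr ka * D powr (la - ka) * real m powr (- la)) powr q / real m = W * real m powr (-1 - la * q)"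
    proof -
      have "(x powr ka * D powr (la - ka) * real m powr (- la)) powr q = W * real m powr (- la * q)"
        unfolding W_def by (simp add: powr_mult powr_powr)
      moreover have "real m powr (- la * q) / real m = real m powr (-1 - la * q)"
        using m0 by (simp add: powr_diff[symmetric] powr_minus_divide) (simp add: powr_add[symmetric] powr_diff)
      ultimately show ?thesis by (metis times_divide_eq_right)
    qed
    have t2: "x powr ka * D powr (la - 2*ka) * real m powr (ka - la) * L / real m = V * (L * real m powr (ka - la - 1))"
    proof -
      have pm: "real m powr (ka - la - 1) = real m powr (ka - la) / real m" using m0 by (simp add: powr_diff)
      show ?thesis unfolding V_def pm by simp
    qed
    have e0: "Phi ka la x D m / real m = (x powr ka * D powr (la - ka) * real m powr (- la)) powr q / real m
        + x powr ka * D powr (la - 2*ka) * real m powr (ka - la) * L / real m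
        + (D^2 / (x * real m)) / real m + (1 / real m) / real m"
      unfolding Phi_def Let_def L_def[symmetric] q_def[symmetric] by (simp only: add_divide_distrib)
    have e3: "(D^2 / (x * real m)) / real m = (D^2/x) * real m powr (-1 - 1)" unfolding mm by simp
    have e4: "(1 / real m) / real m = real m powr (-1 - 1)" unfolding mm by simp
    show ?thesis unfolding e0 t1 t2 e3 e4 ..
  qed
  have s1: "(\<Sum>m\<in>{1..M}. real m powr (-1 - la * q)) \<le> 4"
  proof -
    have "(\<Sum>m\<in>{1..M}. real m powr (-1 - la * q)) \<le> 1 + 1 / (la * q)"
      using lq by (intro pow_sum_bound) auto
    also have "1 / (la * q) \<le> 3" using lq by (simp add: field_simps)
    finally show ?thesis by simp
  qed
  have s2: "(\<Sum>m\<in>{1..M}. real m powr (-1 - 1)) \<le> 2"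
    using pow_sum_bound[of 1 M] by simp
  have s3: "(\<Sum>m\<in>{1..M}. L * real m powr (ka - la - 1)) \<le> 3 * (2 + ln D)"
  proof (cases "ka = 0")
    case True
    have e: "-1 - la = ka - la - 1" using True by simp
    have ps: "(\<Sum>m\<in>{1..M}. real m powr (ka - la - 1)) \<le> 1 + 1 / la"
      using pow_sum_bound[of la M, unfolded e] la by simp
    have "(\<Sum>m\<in>{1..M}. L * real m powr (ka - la - 1)) = L * (\<Sum>m\<in>{1..M}. real m powr (ka - la - 1))"
      by (simp add: sum_distrib_left)
    also have "\<dots> \<le> L * (1 + 1 / la)" using ps L0 by (intro mult_left_mono) auto
    also have "\<dots> \<le> L * 3" using la L0 by (intro mult_left_mono) (auto simp: field_simps)
    also have "\<dots> \<le> 3 * (2 + ln D)" unfolding L_def using True D1 by simp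
    finally show ?thesis .
  next
    case False
    have h1: "(\<Sum>m\<in>{1..M}. L * real m powr (ka - la - 1)) \<le> (\<Sum>m\<in>{1..M}. 1 / real m)"
    proof (intro sum_mono)
      fix m assume m: "m \<in> {1..M}"
      have "real m powr (ka - la - 1) \<le> real m powr (-1)" using m ka la by (intro powr_mono) auto
      thus "L * real m powr (ka - la - 1) \<le> 1 / real m" unfolding L_def using False m by (simp add: powr_minus_divide)
    qed
    have h2: "(\<Sum>m\<in>{1..M}. 1 / real m) \<le> 1 + ln (real M)" by (rule harm_sum_bound[OF M1])
    have h3: "ln (real M) \<le> ln (2 * D)" using M1 M2 by simp
    have h4: "ln (2 * D) = ln 2 + ln D" using D1 by (simp add: ln_mult)
    have h5: "ln (2::real) \<le> 1" using ln_2_less_1 by simp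
    have "ln D \<ge> 0" using D1 by simp
    have a1: "(\<Sum>m\<in>{1..M}. L * real m powr (ka - la - 1)) \<le> 2 + ln D"
      using h1 h2 h3 h4 h5 by linarith
    have a2: "2 + ln D \<le> 3 * (2 + ln D)" using \<open>ln D \<ge> 0\<close> by (simp add: algebra_simps)
    show ?thesis using order_trans[OF a1 a2] .
  qed
  have "(\<Sum>m\<in>{1..M}. Phi ka la x D m / real m) = (\<Sum>m\<in>{1..M}. W * real m powr (-1 - la * q) + V * (L * real m powr (ka - la - 1))
       + (D^2/x) * real m powr (-1 - 1) + real m powr (-1 - 1))"
    by (rule sum.cong[OF refl eq])
  also have "\<dots> = W * (\<Sum>m\<in>{1..M}. real m powr (-1 - la * q)) + V * (\<Sum>m\<in>{1..M}. L * real m powr (ka - la - 1))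
       + (D^2/x) * (\<Sum>m\<in>{1..M}. real m powr (-1 - 1)) + (\<Sum>m\<in>{1..M}. real m powr (-1 - 1))"
    by (simp add: sum.distrib sum_distrib_left)
  also have "\<dots> \<le> W * 4 + V * (3 * (2 + ln D)) + (D^2/x) * 2 + 2"
    using s1 s2 s3 W0 x0 by (intro add_mono mult_left_mono) auto
  finally show ?thesis unfolding M_def W_def V_def q_def by (simp add: algebra_simps)
qed

lemma final_est:
  fixes x D ka la :: real
  assumes D1: "1 \<le> D" and xD: "D \<le> x" and ka: "0 \<le> ka" "ka \<le> 1/2" and la: "1/2 \<le> la" "la \<le> 1"
  shows "4 * (x powr ka * D powr (la - ka)) powr (1/(1+ka)) + 3 * (x powr ka * D powr (la - 2*ka)) * (2 + ln D)
        + 2 * (D^2/x) + 2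
     \<le> 90 * ((x powr ka * D powr (la - ka)) powr (1 / (1 + ka)) + x powr ka * D powr (la - 2 * ka) * ln x + D^2 / x)"
proof -
  define W where "W = (x powr ka * D powr (la - ka)) powr (1/(1+ka))"
  define V where "V = x powr ka * D powr (la - 2*ka)"
  define Y where "Y = D^2 / x"
  have x1: "1 \<le> x" using D1 xD by simp
  have W1: "W \<ge> 1"
  proof -
    have a: "x powr ka \<ge> 1" using x1 ka by (intro ge_one_powr_ge_zero) auto
    have b: "D powr (la - ka) \<ge> 1" using D1 ka la by (intro ge_one_powr_ge_zero) auto
    have "x powr ka * D powr (la - ka) \<ge> 1 * 1" using a b by (intro mult_mono) auto
    thus ?thesis unfolding W_def using ka by (intro ge_one_powr_ge_zero) auto
  qed
  have V0: "V \<ge> 0" unfolding V_def by simp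
  have Y0: "Y \<ge> 0" unfolding Y_def using x1 by simp
  have lnx: "ln x \<ge> 0" using x1 by simp
  have lnD: "ln D \<le> ln x" "ln D \<ge> 0" using D1 xD by auto
  have key: "3 * V * (2 + ln D) \<le> 81 * W + 9 * (V * ln x)"
  proof (cases "x \<ge> exp 1")
    case True
    hence "ln x \<ge> 1" using x1 by (simp add: ln_ge_iff)
    hence "2 + ln D \<le> 3 * ln x" using lnD by linarith
    hence "3 * V * (2 + ln D) \<le> 3 * V * (3 * ln x)" using V0 by (intro mult_left_mono) auto
    moreover have "81 * W \<ge> 0" using W1 by simp
    ultimately show ?thesis by (simp add: algebra_simps)
  next
    case False
    hence x3: "x < 3" using exp_le by simp
    have "x powr ka \<le> x powr 1" using x1 ka by (intro powr_mono) auto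
    hence v1: "x powr ka \<le> 3" using x3 x1 by simp
    have "D powr (la - 2*ka) \<le> D powr 1" using D1 ka la by (intro powr_mono) auto
    hence v2: "D powr (la - 2*ka) \<le> 3" using x3 D1 xD by simp
    have "V \<le> 3 * 3" unfolding V_def using v1 v2 by (intro mult_mono) auto
    moreover have "ln x < ln (exp 1)" using False x1 by (subst ln_less_cancel_iff) auto
    hence "ln x < 1" by simp
    hence "2 + ln D \<le> 3" using lnD by linarith
    ultimately have "3 * V * (2 + ln D) \<le> 3 * 9 * 3" using V0 lnD by (intro mult_mono) auto
    moreover have "9 * (V * ln x) \<ge> 0" using V0 lnx by simp
    ultimately show ?thesis using W1 by linarith
  qed
  have "4 * W + 3 * V * (2 + ln D) + 2 * Y + 2 \<le> 90 * (W + V * ln x + Y)"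
  proof -
    have vl: "V * ln x \<ge> 0" using V0 lnx by simp
    have "4 * W + 3 * V * (2 + ln D) + 2 * Y + 2 \<le> 90 * W + 90 * (V * ln x) + 90 * Y"
      using key W1 Y0 vl by linarith
    thus ?thesis by (simp add: algebra_simps)
  qed
  thus ?thesis unfolding W_def V_def Y_def by (simp add: mult.assoc)
qed

lemma main_bound:
  fixes ka la dl :: real
  assumes ep: "exponent_pair ka la" and dl: "dl \<ge> 0"
  shows "\<exists>K>0. \<forall>(g::nat \<Rightarrow> complex) B x D. (\<forall>m. 1 \<le> m \<longrightarrow> real m \<le> 2 * D \<longrightarrow> cmod (g m) \<le> B) \<longrightarrow> 1 \<le> D \<longrightarrow> D \<le> x \<longrightarrow>
      cmod (frakS dl (id_conv g) x D) \<le> K * B * ((x powr ka * D powr (la - ka)) powr (1 / (1 + ka))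
                       + x powr ka * D powr (la - 2 * ka) * ln x + D\<^sup>2 / x)"
proof -
  obtain K1 where K1: "K1 > 0" and KK1: "\<forall>m x D. 1 \<le> D \<longrightarrow> 1 \<le> m \<longrightarrow> real m \<le> 2 * D \<longrightarrow> D \<le> x \<longrightarrow>
     \<bar>\<Sum>n\<in>JJ m D. psi (x / (real m * real n + dl))\<bar> \<le> K1 * Phi ka la x D m"
    using Im_bound_all[OF ep dl] by blast
  have kl: "0 \<le> ka" "ka \<le> 1/2" "1/2 \<le> la" "la \<le> 1" using ep_ka[OF ep] by auto
  show ?thesis
  proof (intro exI[of _ "90 * K1"] conjI allI impI)
    show "90 * K1 > 0" using K1 by simp
    fix g :: "nat \<Rightarrow> complex" and B x D :: real
    assume gB: "\<forall>m. 1 \<le> m \<longrightarrow> real m \<le> 2 * D \<longrightarrow> cmod (g m) \<le> B" and D1: "1 \<le> D" and xD: "D \<le> x"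
    define M where "M = nat \<lfloor>2*D\<rfloor>"
    define I where "I m = (\<Sum>n\<in>JJ m D. psi (x / (real m * real n + dl)))" for m
    have x0: "x > 0" using D1 xD by simp
    have "cmod (g 1) \<le> B" using gB D1 by simp
    hence B0: "B \<ge> 0" using norm_ge_zero[of "g 1"] by linarith
    have M2: "real M \<le> 2 * D" unfolding M_def using D1 by linarith
    have mM: "1 \<le> m \<and> real m \<le> 2 * D" if "m \<in> {1..M}" for m
    proof -
      have "real m \<le> real M" using that by simp
      thus ?thesis using that M2 by auto
    qed
    have "cmod (frakS dl (id_conv g) x D) = cmod (\<Sum>m\<in>{1..M}. g m / of_nat m * of_real (I m))"
      unfolding frakS_reindex[OF D1] M_def I_def ..
    also have "\<dots> \<le> (\<Sum>m\<in>{1..M}. cmod (g m / of_nat m * of_real (I m)))" by (rule norm_sum)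
    also have "\<dots> \<le> (\<Sum>m\<in>{1..M}. B * K1 * (Phi ka la x D m / real m))"
    proof (rule sum_mono)
      fix m assume m: "m \<in> {1..M}"
      have m0: "real m > 0" using mM[OF m] by simp
      have "cmod (g m / of_nat m * of_real (I m)) = cmod (g m) * \<bar>I m\<bar> / real m"
        by (simp add: norm_mult norm_divide)
      also have "\<dots> \<le> B * (K1 * Phi ka la x D m) / real m"
        using gB mM[OF m] KK1 D1 xD m0 B0 unfolding I_def
        by (intro divide_right_mono mult_mono) auto
      finally show "cmod (g m / of_nat m * of_real (I m)) \<le> B * K1 * (Phi ka la x D m / real m)" by simp
    qed
    also have "\<dots> = B * K1 * (\<Sum>m\<in>{1..M}. Phi ka la x D m / real m)" by (simp add: sum_distrib_left)
    also have "\<dots> \<le> B * K1 * (4 * (x powr ka * D powr (la - ka)) powr (1/(1+ka)) + 3 * (x powr ka * D powr (la - 2*ka)) * (2 + ln D)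
        + 2 * (D^2/x) + 2)"
      using Phi_sum[OF D1 xD kl] B0 K1 unfolding M_def by (intro mult_left_mono) auto
    also have "\<dots> \<le> B * K1 * (90 * ((x powr ka * D powr (la - ka)) powr (1 / (1 + ka)) + x powr ka * D powr (la - 2 * ka) * ln x + D^2 / x))"
      using final_est[OF D1 xD kl] B0 K1 by (intro mult_left_mono) auto
    finally show "cmod (frakS dl (id_conv g) x D) \<le> 90 * K1 * B * ((x powr ka * D powr (la - ka)) powr (1 / (1 + ka))
                       + x powr ka * D powr (la - 2 * ka) * ln x + D\<^sup>2 / x)" by (simp add: mult_ac)
  qed
qed

theorem proposition3p1:
  fixes g :: "nat \<Rightarrow> complex" and dl ka la :: real
  assumes "dl \<ge> 0" and "exponent_pair ka la"
  shows "((\<exists>B. \<forall>n\<ge>1. cmod (g n) \<le> B) \<longrightarrow>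
           (\<exists>C. \<forall>x D. 1 \<le> D \<longrightarrow> D \<le> x \<longrightarrow>
              cmod (frakS dl (id_conv g) x D)
                \<le> C * ((x powr ka * D powr (la - ka)) powr (1 / (1 + ka))
                       + x powr ka * D powr (la - 2 * ka) * ln x + D\<^sup>2 / x)))
       \<and> ((\<forall>eps>0. \<exists>B. \<forall>n\<ge>1. cmod (g n) \<le> B * real n powr eps) \<longrightarrow>
           (\<forall>eps>0. \<exists>C. \<forall>x D. 1 \<le> D \<longrightarrow> D \<le> x \<longrightarrow>
              cmod (frakS dl (id_conv g) x D)
                \<le> C * D powr eps * ((x powr ka * D powr (la - ka)) powr (1 / (1 + ka))
                       + x powr ka * D powr (la - 2 * ka) * ln x + D\<^sup>2 / x)))"
proof -
  obtain K where K: "K > 0" and KK: "\<forall>(g::nat \<Rightarrow> complex) B x D. (\<forall>m. 1 \<le> m \<longrightarrow> real m \<le> 2 * D \<longrightarrow> cmod (g m) \<le> B) \<longrightarrow> 1 \<le> D \<longrightarrow> D \<le> x \<longrightarrow>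
      cmod (frakS dl (id_conv g) x D) \<le> K * B * ((x powr ka * D powr (la - ka)) powr (1 / (1 + ka))
                       + x powr ka * D powr (la - 2 * ka) * ln x + D\<^sup>2 / x)"
    using main_bound[OF assms(2,1)] by blast
  show ?thesis
  proof (intro conjI impI allI)
    assume "\<exists>B. \<forall>n\<ge>1. cmod (g n) \<le> B"
    then obtain B where B: "\<forall>n\<ge>1. cmod (g n) \<le> B" by blast
    show "\<exists>C. \<forall>x D. 1 \<le> D \<longrightarrow> D \<le> x \<longrightarrow>
              cmod (frakS dl (id_conv g) x D)
                \<le> C * ((x powr ka * D powr (la - ka)) powr (1 / (1 + ka))
                       + x powr ka * D powr (la - 2 * ka) * ln x + D\<^sup>2 / x)"
    proof (intro exI[of _ "K * B"] allI impI)
      fix x D :: real assume D1: "1 \<le> D" and xD: "D \<le> x"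
      have "\<forall>m. 1 \<le> m \<longrightarrow> real m \<le> 2 * D \<longrightarrow> cmod (g m) \<le> B" using B by auto
      thus "cmod (frakS dl (id_conv g) x D)
                \<le> K * B * ((x powr ka * D powr (la - ka)) powr (1 / (1 + ka))
                       + x powr ka * D powr (la - 2 * ka) * ln x + D\<^sup>2 / x)"
        using KK D1 xD by blast
    qed
  next
    fix eps :: real
    assume H: "\<forall>eps>0. \<exists>B. \<forall>n\<ge>1. cmod (g n) \<le> B * real n powr eps" and eps: "eps > 0"
    then obtain B where B: "\<forall>n\<ge>1. cmod (g n) \<le> B * real n powr eps" by blast
    have "cmod (g 1) \<le> B * real (1::nat) powr eps" using B by blast
    hence "cmod (g 1) \<le> B" by simp
    hence B0: "B \<ge> 0" using norm_ge_zero[of "g 1"] by linarith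
    show "\<exists>C. \<forall>x D. 1 \<le> D \<longrightarrow> D \<le> x \<longrightarrow>
              cmod (frakS dl (id_conv g) x D)
                \<le> C * D powr eps * ((x powr ka * D powr (la - ka)) powr (1 / (1 + ka))
                       + x powr ka * D powr (la - 2 * ka) * ln x + D\<^sup>2 / x)"
    proof (intro exI[of _ "K * B * 2 powr eps"] allI impI)
      fix x D :: real assume D1: "1 \<le> D" and xD: "D \<le> x"
      have "\<forall>m. 1 \<le> m \<longrightarrow> real m \<le> 2 * D \<longrightarrow> cmod (g m) \<le> B * (2 powr eps * D powr eps)"
      proof (intro allI impI)
        fix m :: nat assume m1: "1 \<le> m" and m2: "real m \<le> 2 * D"
        have "cmod (g m) \<le> B * real m powr eps" using B m1 by simp
        also have "\<dots> \<le> B * (2 * D) powr eps" using m1 m2 eps B0 by (intro mult_left_mono powr_mono2) auto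
        also have "(2 * D) powr eps = 2 powr eps * D powr eps" using D1 by (simp add: powr_mult)
        finally show "cmod (g m) \<le> B * (2 powr eps * D powr eps)" .
      qed
      hence "cmod (frakS dl (id_conv g) x D) \<le> K * (B * (2 powr eps * D powr eps)) * ((x powr ka * D powr (la - ka)) powr (1 / (1 + ka))
                       + x powr ka * D powr (la - 2 * ka) * ln x + D\<^sup>2 / x)"
        using KK D1 xD by blast
      thus "cmod (frakS dl (id_conv g) x D)
                \<le> K * B * 2 powr eps * D powr eps * ((x powr ka * D powr (la - ka)) powr (1 / (1 + ka))
                       + x powr ka * D powr (la - 2 * ka) * ln x + D\<^sup>2 / x)"
        by (simp add: mult_ac)
    qed
  qed
qed

end
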